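(* Let $\lambda\in ba(\mathcal A)$ and let $(h_a)_{a\in\mathfrak A}$ be a uniformly bounded net in $\mathcal B(\mathcal A)$. There exists a uniformly bounded sequence $(f_n)$ in $\mathcal S(\mathcal A)$ which is Cauchy in $L^1(\mu)$ for all $\mu\in ba(\mathcal A,\lambda)$ and such that $\operatorname{LIM}_a\mu(h_a1_A)=\lim_n\mu(f_n1_A)$ for all $A\in\mathcal A$ and $\mu\in ba(\mathcal A,\lambda)$. If $(h_a)$ is increasing, $(f_n)$ can be chosen increasing as well.
   Context: $\mathcal A$ algebra of subsets of $\Omega$; $ba(\mathcal A)$ bounded finitely additive real set functions, total variation $|\mu|$. $\mathcal S(\mathcal A)$ the $\mathcal A$-simple functions, $\mathcal B(\mathcal A)$ its closure under the sup norm. $ba(\mathcal A,\lambda)=\{\mu:\mu\ll\lambda\}$, where $\mu\ll\lambda$ means for every $\varepsilon>0$ there is $\delta>0$ with $|\lambda|(A)<\delta\Rightarrow|\mu|(A)<\varepsilon$. $\operatorname{LIM}_a$ denotes a fixed Banach limit over the directed set $\mathfrak A$ (a norm-one positive linear functional on bounded real nets indexed by $\mathfrak A$ extending the limit of convergent nets). A sequence $(f_n)$ of simple functions is Cauchy in $L^1(\mu)$ if $\lim_n\sup_{p,q}|\mu|(|f_{n+p}-f_{n+q}|)=0$. *)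

theory Defs
  imports "HOL-Analysis.Analysis"
begin

text \<open>Set functions on an algebra M of subsets of Omega (library locale algebra).
  Values of set functions outside M and of functions outside Omega are irrelevant.\<close>

definition fin_add :: "'a set set \<Rightarrow> ('a set \<Rightarrow> real) \<Rightarrow> bool" where
  "fin_add M mu \<longleftrightarrow> (\<forall>A\<in>M. \<forall>B\<in>M. A \<inter> B = {} \<longrightarrow> mu (A \<union> B) = mu A + mu B)"

definition ba :: "'a set set \<Rightarrow> ('a set \<Rightarrow> real) set" where
  "ba M = {mu. fin_add M mu \<and> (\<exists>c. \<forall>A\<in>M. \<bar>mu A\<bar> \<le> c)}"

definition tv :: "'a set set \<Rightarrow> ('a set \<Rightarrow> real) \<Rightarrow> 'a set \<Rightarrow> real" where
  "tv M mu A = Sup {(\<Sum>B\<in>P. \<bar>mu B\<bar>) | P. finite P \<and> P \<subseteq> M \<and> disjoint P \<and> \<Union>P \<subseteq> A}"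

definition ba_ac :: "'a set set \<Rightarrow> ('a set \<Rightarrow> real) \<Rightarrow> ('a set \<Rightarrow> real) set" where
  "ba_ac M lam = {mu \<in> ba M. \<forall>\<epsilon>>0. \<exists>\<delta>>0. \<forall>A\<in>M. tv M lam A < \<delta> \<longrightarrow> tv M mu A < \<epsilon>}"

definition simple_fn :: "'a set \<Rightarrow> 'a set set \<Rightarrow> ('a \<Rightarrow> real) \<Rightarrow> bool" where
  "simple_fn \<Omega> M f \<longleftrightarrow> finite (f ` \<Omega>) \<and> (\<forall>c. {x\<in>\<Omega>. f x = c} \<in> M)"

definition sint :: "'a set \<Rightarrow> ('a set \<Rightarrow> real) \<Rightarrow> ('a \<Rightarrow> real) \<Rightarrow> real" where
  "sint \<Omega> mu f = (\<Sum>c\<in>f ` \<Omega>. c * mu {x\<in>\<Omega>. f x = c})"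

definition bfun :: "'a set \<Rightarrow> 'a set set \<Rightarrow> ('a \<Rightarrow> real) \<Rightarrow> bool" where
  "bfun \<Omega> M h \<longleftrightarrow> (\<forall>\<epsilon>>0. \<exists>s. simple_fn \<Omega> M s \<and> (\<forall>x\<in>\<Omega>. \<bar>h x - s x\<bar> < \<epsilon>))"

definition fa_int :: "'a set \<Rightarrow> 'a set set \<Rightarrow> ('a set \<Rightarrow> real) \<Rightarrow> ('a \<Rightarrow> real) \<Rightarrow> real" where
  "fa_int \<Omega> M mu h = (THE l. \<forall>s. ((\<forall>n. simple_fn \<Omega> M (s n)) \<and>
      (\<forall>\<epsilon>>0. \<exists>N. \<forall>n\<ge>N. \<forall>x\<in>\<Omega>. \<bar>h x - s n x\<bar> \<le> \<epsilon>))
      \<longrightarrow> (\<lambda>n. sint \<Omega> mu (s n)) \<longlonglongrightarrow> l)"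

text \<open>Cauchy in L^1(mu): lim_n sup_{p,q} |mu|(|f_(n+p) - f_(n+q)|) = 0, written out with epsilon.\<close>
definition l1_cauchy :: "'a set \<Rightarrow> 'a set set \<Rightarrow> ('a set \<Rightarrow> real) \<Rightarrow> (nat \<Rightarrow> 'a \<Rightarrow> real) \<Rightarrow> bool" where
  "l1_cauchy \<Omega> M mu f \<longleftrightarrow> (\<forall>\<epsilon>>0. \<exists>N. \<forall>n\<ge>N. \<forall>p q.
      sint \<Omega> (tv M mu) (\<lambda>x. \<bar>f (n + p) x - f (n + q) x\<bar>) \<le> \<epsilon>)"

definition directed :: "('i \<Rightarrow> 'i \<Rightarrow> bool) \<Rightarrow> bool" where
  "directed ord \<longleftrightarrow> (\<forall>a. ord a a) \<and> (\<forall>a b c. ord a b \<longrightarrow> ord b c \<longrightarrow> ord a c)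
     \<and> (\<forall>a b. \<exists>c. ord a c \<and> ord b c)"

definition bounded_net :: "('i \<Rightarrow> real) \<Rightarrow> bool" where
  "bounded_net x \<longleftrightarrow> (\<exists>c. \<forall>a. \<bar>x a\<bar> \<le> c)"

definition net_tendsto :: "('i \<Rightarrow> 'i \<Rightarrow> bool) \<Rightarrow> ('i \<Rightarrow> real) \<Rightarrow> real \<Rightarrow> bool" where
  "net_tendsto ord x l \<longleftrightarrow> (\<forall>\<epsilon>>0. \<exists>a0. \<forall>a. ord a0 a \<longrightarrow> \<bar>x a - l\<bar> < \<epsilon>)"

definition banach_limit :: "('i \<Rightarrow> 'i \<Rightarrow> bool) \<Rightarrow> (('i \<Rightarrow> real) \<Rightarrow> real) \<Rightarrow> bool" where
  "banach_limit ord L \<longleftrightarrow>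
     (\<forall>x y. bounded_net x \<longrightarrow> bounded_net y \<longrightarrow> L (\<lambda>a. x a + y a) = L x + L y)
   \<and> (\<forall>c x. bounded_net x \<longrightarrow> L (\<lambda>a. c * x a) = c * L x)
   \<and> (\<forall>x. bounded_net x \<longrightarrow> (\<forall>a. 0 \<le> x a) \<longrightarrow> 0 \<le> L x)
   \<and> (\<forall>x c. (\<forall>a. \<bar>x a\<bar> \<le> c) \<longrightarrow> \<bar>L x\<bar> \<le> c)
   \<and> (\<forall>x l. bounded_net x \<longrightarrow> net_tendsto ord x l \<longrightarrow> L x = l)"

end

theory Submission
  imports Defs
begin


context algebra begin

lemma fa_empty: assumes "fin_add M mu" shows "mu {} = 0"
  using assms unfolding fin_add_def by (metis Un_empty_left empty_sets inf_bot_left add_cancel_left_left)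

lemma fa_UN:
  assumes "fin_add M mu" "finite I" "\<And>i. i \<in> I \<Longrightarrow> B i \<in> M" "disjoint_family_on B I"
  shows "mu (\<Union>i\<in>I. B i) = (\<Sum>i\<in>I. mu (B i))"
  using assms(2-4)
proof (induction I rule: finite_induct)
  case empty then show ?case using fa_empty[OF assms(1)] by simp
next
  case (insert j I)
  have dj: "disjoint_family_on B I" using insert.prems(2) by (auto simp: disjoint_family_on_def)
  have "B j \<inter> (\<Union>i\<in>I. B i) = {}" using insert.prems(2) insert.hyps(2)
    by (auto simp: disjoint_family_on_def)
  moreover have "(\<Union>i\<in>I. B i) \<in> M" using insert by auto
  ultimately have "mu (B j \<union> (\<Union>i\<in>I. B i)) = mu (B j) + mu (\<Union>i\<in>I. B i)"
    using assms(1) insert.prems(1) unfolding fin_add_def by auto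
  then show ?case using insert.IH[OF _ dj] insert by simp
qed

lemma fa_diff: assumes "fin_add M mu" "A \<in> M" "B \<in> M" "B \<subseteq> A"
  shows "mu (A - B) = mu A - mu B"
proof -
  have "mu ((A - B) \<union> B) = mu (A - B) + mu B"
    using assms(1) Diff[OF assms(2,3)] assms(3) unfolding fin_add_def by blast
  moreover have "(A - B) \<union> B = A" using assms by auto
  ultimately show ?thesis by simp
qed

lemma fa_mono: assumes "fin_add M mu" "\<And>A. A \<in> M \<Longrightarrow> 0 \<le> mu A" "A \<in> M" "B \<in> M" "B \<subseteq> A"
  shows "mu B \<le> mu A"
  using fa_diff[OF assms(1,3,4,5)] assms(2)[of "A - B"] assms(3,4) by auto

lemma part_level:
  assumes "finite I" "\<And>i. i \<in> I \<Longrightarrow> B i \<in> M" "(\<Union>i\<in>I. B i) = \<Omega>"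
    "\<And>i x. i \<in> I \<Longrightarrow> x \<in> B i \<Longrightarrow> u x = w i"
  shows "{x\<in>\<Omega>. u x = c} = (\<Union>i\<in>{i\<in>I. w i = c}. B i)"
  using assms by auto

lemma part_simple:
  assumes "finite I" "\<And>i. i \<in> I \<Longrightarrow> B i \<in> M" "(\<Union>i\<in>I. B i) = \<Omega>"
    "\<And>i x. i \<in> I \<Longrightarrow> x \<in> B i \<Longrightarrow> u x = w i"
  shows "simple_fn \<Omega> M u"
proof -
  have "u ` \<Omega> \<subseteq> w ` I" using assms(3,4) by auto
  hence "finite (u ` \<Omega>)" using assms(1) finite_subset by blast
  moreover have "{x\<in>\<Omega>. u x = c} \<in> M" for c
  proof -
    have "(\<Union>i\<in>{i\<in>I. w i = c}. B i) \<in> M" using assms(1,2) by (intro finite_UN) auto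
    then show ?thesis using part_level[OF assms, where c=c] by simp
  qed
  ultimately show ?thesis unfolding simple_fn_def by auto
qed

lemma part_sint:
  assumes fa: "fin_add M mu" and "finite I" "\<And>i. i \<in> I \<Longrightarrow> B i \<in> M" "(\<Union>i\<in>I. B i) = \<Omega>"
    "disjoint_family_on B I"
    "\<And>i x. i \<in> I \<Longrightarrow> x \<in> B i \<Longrightarrow> u x = w i"
  shows "sint \<Omega> mu u = (\<Sum>i\<in>I. w i * mu (B i))"
proof -
  let ?S = "{i\<in>I. B i \<noteq> {}}"
  have fS: "finite ?S" using assms(2) by auto
  have uI: "u ` \<Omega> \<subseteq> w ` I" using assms(4,6) by auto
  hence fT: "finite (u ` \<Omega>)" using assms(2) finite_subset by blast
  have img: "w ` ?S \<subseteq> u ` \<Omega>" using assms(4,6) by force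
  have e1: "(\<Sum>i\<in>I. w i * mu (B i)) = (\<Sum>i\<in>?S. w i * mu (B i))"
    by (rule sum.mono_neutral_right) (use assms(2) fa_empty[OF fa] in auto)
  have e2: "mu {x\<in>\<Omega>. u x = c} = (\<Sum>i\<in>{i\<in>?S. w i = c}. mu (B i))" for c
  proof -
    have "mu (\<Union>i\<in>{i\<in>I. w i = c}. B i) = (\<Sum>i\<in>{i\<in>I. w i = c}. mu (B i))"
      by (rule fa_UN[OF fa]) (use assms(2,3,5) in \<open>auto simp: disjoint_family_on_def\<close>)
    then have "mu {x\<in>\<Omega>. u x = c} = (\<Sum>i\<in>{i\<in>I. w i = c}. mu (B i))"
      using part_level[OF assms(2,3,4,6), where c=c] by simp
    also have "\<dots> = (\<Sum>i\<in>{i\<in>?S. w i = c}. mu (B i))"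
      by (rule sum.mono_neutral_right) (use assms(2) fa_empty[OF fa] in auto)
    finally show ?thesis .
  qed
  have "sint \<Omega> mu u = (\<Sum>c\<in>u ` \<Omega>. (\<Sum>i\<in>{i\<in>?S. w i = c}. w i * mu (B i)))"
    unfolding sint_def e2 sum_distrib_left by (intro sum.cong) auto
  also have "\<dots> = (\<Sum>i\<in>?S. w i * mu (B i))"
    using sum.group[OF fS fT img, of "\<lambda>i. w i * mu (B i)"] by simp
  finally show ?thesis using e1 by simp
qed

end


context algebra begin

lemma simple_level: "simple_fn \<Omega> M f \<Longrightarrow> {x\<in>\<Omega>. f x = c} \<in> M"
  unfolding simple_fn_def by auto

lemma simple_finite: "simple_fn \<Omega> M f \<Longrightarrow> finite (f ` \<Omega>)"
  unfolding simple_fn_def by auto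

lemma simple_bounded: assumes "simple_fn \<Omega> M f" shows "\<exists>K. \<forall>x\<in>\<Omega>. \<bar>f x\<bar> \<le> K"
proof -
  have "\<bar>f x\<bar> \<le> (\<Sum>y\<in>f ` \<Omega>. \<bar>y\<bar>)" if "x \<in> \<Omega>" for x
    using member_le_sum[of "f x" "f ` \<Omega>" abs] simple_finite[OF assms] that by auto
  then show ?thesis by blast
qed

definition cell :: "('a \<Rightarrow> real) \<Rightarrow> ('a \<Rightarrow> real) \<Rightarrow> real \<times> real \<Rightarrow> 'a set" where
  "cell f g p = {x\<in>\<Omega>. f x = fst p \<and> g x = snd p}"

lemma cell_facts:
  assumes "simple_fn \<Omega> M f" "simple_fn \<Omega> M g"
  shows "finite (f ` \<Omega> \<times> g ` \<Omega>)" "\<And>p. cell f g p \<in> M"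
    "(\<Union>p\<in>f ` \<Omega> \<times> g ` \<Omega>. cell f g p) = \<Omega>"
    "disjoint_family_on (cell f g) (f ` \<Omega> \<times> g ` \<Omega>)"
    "\<And>p x. x \<in> cell f g p \<Longrightarrow> f x = fst p \<and> g x = snd p"
proof -
  show "finite (f ` \<Omega> \<times> g ` \<Omega>)" using assms by (auto simp: simple_fn_def)
  show "cell f g p \<in> M" for p
  proof -
    have "cell f g p = {x\<in>\<Omega>. f x = fst p} \<inter> {x\<in>\<Omega>. g x = snd p}" unfolding cell_def by auto
    then show ?thesis using simple_level[OF assms(1)] simple_level[OF assms(2)] by auto
  qed
  show "(\<Union>p\<in>f ` \<Omega> \<times> g ` \<Omega>. cell f g p) = \<Omega>" unfolding cell_def by auto
  show "disjoint_family_on (cell f g) (f ` \<Omega> \<times> g ` \<Omega>)"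
    unfolding disjoint_family_on_def cell_def by (auto simp: prod_eq_iff)
  show "x \<in> cell f g p \<Longrightarrow> f x = fst p \<and> g x = snd p" for p x unfolding cell_def by auto
qed

lemma simple_comb:
  assumes "simple_fn \<Omega> M f" "simple_fn \<Omega> M g"
  shows "simple_fn \<Omega> M (\<lambda>x. F (f x) (g x))"
  using cell_facts[OF assms]
  by (intro part_simple[where I="f ` \<Omega> \<times> g ` \<Omega>" and B="cell f g" and w="\<lambda>p. F (fst p) (snd p)"]) auto

lemma sint_comb:
  assumes "fin_add M mu" "simple_fn \<Omega> M f" "simple_fn \<Omega> M g"
  shows "sint \<Omega> mu (\<lambda>x. F (f x) (g x)) = (\<Sum>p\<in>f ` \<Omega> \<times> g ` \<Omega>. F (fst p) (snd p) * mu (cell f g p))"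
  using cell_facts[OF assms(2,3)]
  by (intro part_sint[OF assms(1), where I="f ` \<Omega> \<times> g ` \<Omega>" and B="cell f g"]) auto

lemma simple_const: "simple_fn \<Omega> M (\<lambda>x. K)"
  by (rule part_simple[where I="{()}" and B="\<lambda>_. \<Omega>" and w="\<lambda>_. K"]) auto

lemma simple_indicator: "A \<in> M \<Longrightarrow> simple_fn \<Omega> M (indicator A :: 'a \<Rightarrow> real)"
proof -
  assume A: "A \<in> M"
  have "\<Omega> - A \<in> M" using A by auto
  show ?thesis
    using A sets_into_space[OF A] \<open>\<Omega> - A \<in> M\<close>
    by (intro part_simple[where I="UNIV :: bool set" and B="\<lambda>b. if b then A else \<Omega> - A"
          and w="\<lambda>b. if b then 1 else 0"]) auto
qed

lemma simple_map: "simple_fn \<Omega> M f \<Longrightarrow> simple_fn \<Omega> M (\<lambda>x. F (f x))"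
  using simple_comb[OF _ simple_const, of f "\<lambda>a b. F a" 0] by simp

lemma sint_add:
  assumes "fin_add M mu" "simple_fn \<Omega> M f" "simple_fn \<Omega> M g"
  shows "sint \<Omega> mu (\<lambda>x. f x + g x) = sint \<Omega> mu f + sint \<Omega> mu g"
  using sint_comb[OF assms, of "(+)"] sint_comb[OF assms, of "\<lambda>a b. a"] sint_comb[OF assms, of "\<lambda>a b. b"]
  by (simp add: distrib_right sum.distrib)

lemma sint_diff:
  assumes "fin_add M mu" "simple_fn \<Omega> M f" "simple_fn \<Omega> M g"
  shows "sint \<Omega> mu (\<lambda>x. f x - g x) = sint \<Omega> mu f - sint \<Omega> mu g"
  using sint_comb[OF assms, of "(-)"] sint_comb[OF assms, of "\<lambda>a b. a"] sint_comb[OF assms, of "\<lambda>a b. b"]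
  by (simp add: left_diff_distrib sum_subtractf)

lemma sint_cmult:
  assumes "fin_add M mu" "simple_fn \<Omega> M f"
  shows "sint \<Omega> mu (\<lambda>x. c * f x) = c * sint \<Omega> mu f"
  using sint_comb[OF assms assms(2), of "\<lambda>a b. c * a"] sint_comb[OF assms assms(2), of "\<lambda>a b. a"]
  by (simp add: sum_distrib_left mult.assoc)

lemma sint_mono:
  assumes "fin_add M mu" "\<And>A. A \<in> M \<Longrightarrow> 0 \<le> mu A" "simple_fn \<Omega> M f" "simple_fn \<Omega> M g"
    "\<And>x. x \<in> \<Omega> \<Longrightarrow> f x \<le> g x"
  shows "sint \<Omega> mu f \<le> sint \<Omega> mu g"
proof -
  have "sint \<Omega> mu f = (\<Sum>p\<in>f ` \<Omega> \<times> g ` \<Omega>. fst p * mu (cell f g p))"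
    using sint_comb[OF assms(1,3,4), of "\<lambda>a b. a"] by simp
  also have "\<dots> \<le> (\<Sum>p\<in>f ` \<Omega> \<times> g ` \<Omega>. snd p * mu (cell f g p))"
  proof (rule sum_mono)
    fix p assume "p \<in> f ` \<Omega> \<times> g ` \<Omega>"
    show "fst p * mu (cell f g p) \<le> snd p * mu (cell f g p)"
    proof (cases "cell f g p = {}")
      case True then show ?thesis using fa_empty[OF assms(1)] by simp
    next
      case False
      then obtain x where "x \<in> cell f g p" by auto
      then have "x \<in> \<Omega>" "f x = fst p" "g x = snd p" unfolding cell_def by auto
      then have "fst p \<le> snd p" using assms(5) by force
      then show ?thesis using assms(2) cell_facts(2)[OF assms(3,4)] by (simp add: mult_right_mono)
    qed
  qed
  also have "\<dots> = sint \<Omega> mu g" using sint_comb[OF assms(1,3,4), of "\<lambda>a b. b"] by simp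
  finally show ?thesis .
qed

lemma level_part:
  assumes "simple_fn \<Omega> M f"
  shows "finite (f ` \<Omega>)" "\<And>c. {x\<in>\<Omega>. f x = c} \<in> M" "(\<Union>c\<in>f ` \<Omega>. {x\<in>\<Omega>. f x = c}) = \<Omega>"
    "disjoint_family_on (\<lambda>c. {x\<in>\<Omega>. f x = c}) (f ` \<Omega>)"
  using assms unfolding simple_fn_def disjoint_family_on_def by auto

lemma sint_abs_le:
  assumes "fin_add M mu" "fin_add M nu" "\<And>A. A \<in> M \<Longrightarrow> \<bar>mu A\<bar> \<le> nu A" "simple_fn \<Omega> M f"
  shows "\<bar>sint \<Omega> mu f\<bar> \<le> sint \<Omega> nu (\<lambda>x. \<bar>f x\<bar>)"
proof -
  have e: "sint \<Omega> nu (\<lambda>x. \<bar>f x\<bar>) = (\<Sum>c\<in>f ` \<Omega>. \<bar>c\<bar> * nu {x\<in>\<Omega>. f x = c})"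
    using level_part[OF assms(4)] by (intro part_sint[OF assms(2)]) auto
  have "\<bar>sint \<Omega> mu f\<bar> \<le> (\<Sum>c\<in>f ` \<Omega>. \<bar>c * mu {x\<in>\<Omega>. f x = c}\<bar>)"
    unfolding sint_def by (rule sum_abs)
  also have "\<dots> \<le> (\<Sum>c\<in>f ` \<Omega>. \<bar>c\<bar> * nu {x\<in>\<Omega>. f x = c})"
    using assms(3)[OF simple_level[OF assms(4)]] by (intro sum_mono) (simp add: abs_mult mult_left_mono)
  finally show ?thesis using e by simp
qed

lemma sint_const:
  assumes "fin_add M mu" shows "sint \<Omega> mu (\<lambda>x. K) = K * mu \<Omega>"
  using part_sint[OF assms, where I="{()}" and B="\<lambda>_. \<Omega>" and w="\<lambda>_. K" and u="\<lambda>x. K"]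
  by (auto simp: disjoint_family_on_def)

lemma sint_indicator:
  assumes "fin_add M mu" "A \<in> M" shows "sint \<Omega> mu (indicator A) = mu A"
proof -
  have "\<Omega> - A \<in> M" using assms by auto
  then have "sint \<Omega> mu (indicator A) = (\<Sum>b\<in>UNIV. (if b then 1 else 0) * mu (if b then A else \<Omega> - A))"
    using assms(2) sets_into_space[OF assms(2)]
    by (intro part_sint[OF assms(1)]) (auto simp: disjoint_family_on_def)
  then show ?thesis by (simp add: UNIV_bool)
qed

lemma sint_measure_add: "sint \<Omega> (\<lambda>A. mu A + nu A) f = sint \<Omega> mu f + sint \<Omega> nu f"
  unfolding sint_def by (simp add: distrib_left sum.distrib)

lemma sint_measure_cmult: "sint \<Omega> (\<lambda>A. c * mu A) f = c * sint \<Omega> mu f"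
  unfolding sint_def by (simp add: sum_distrib_left mult.left_commute)

lemma sint_measure_diff: "sint \<Omega> (\<lambda>A. mu A - nu A) f = sint \<Omega> mu f - sint \<Omega> nu f"
  unfolding sint_def by (simp add: right_diff_distrib sum_subtractf)

lemma fin_add_lin: "fin_add M mu \<Longrightarrow> fin_add M nu \<Longrightarrow> fin_add M (\<lambda>A. a * mu A + b * nu A)"
  unfolding fin_add_def by (simp add: algebra_simps)

lemma fin_add_sint: assumes "fin_add M mu" "simple_fn \<Omega> M g"
  shows "fin_add M (\<lambda>A. sint \<Omega> mu (\<lambda>x. g x * indicator A x))"
  unfolding fin_add_def
proof (intro ballI impI)
  fix A B assume AB: "A \<in> M" "B \<in> M" "A \<inter> B = {}"
  have "(\<lambda>x. g x * indicator (A \<union> B) x) = (\<lambda>x. g x * indicator A x + g x * indicator B x)"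
    using AB(3) by (auto simp: indicator_def fun_eq_iff)
  then show "sint \<Omega> mu (\<lambda>x. g x * indicator (A \<union> B) x) =
    sint \<Omega> mu (\<lambda>x. g x * indicator A x) + sint \<Omega> mu (\<lambda>x. g x * indicator B x)"
    using sint_add[OF assms(1) simple_comb[OF assms(2) simple_indicator[OF AB(1)]]
        simple_comb[OF assms(2) simple_indicator[OF AB(2)]]] by simp
qed

end


definition adm :: "'a set set \<Rightarrow> 'a set \<Rightarrow> 'a set set \<Rightarrow> bool" where
  "adm M A P \<longleftrightarrow> finite P \<and> P \<subseteq> M \<and> disjoint P \<and> \<Union>P \<subseteq> A"

definition psup :: "'a set set \<Rightarrow> ('a set \<Rightarrow> real) \<Rightarrow> 'a set \<Rightarrow> real" where
  "psup M phi A = Sup {(\<Sum>B\<in>P. phi B) | P. adm M A P}"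

lemma tv_psup: "tv M mu A = psup M (\<lambda>B. \<bar>mu B\<bar>) A"
  unfolding tv_def psup_def adm_def by simp

locale gen_sup = algebra +
  fixes phi :: "'a set \<Rightarrow> real" and K :: real
  assumes phi_nn: "\<And>A. A \<in> M \<Longrightarrow> 0 \<le> phi A"
    and phi_empty: "phi {} = 0"
    and phi_sub: "\<And>A B. A \<in> M \<Longrightarrow> B \<in> M \<Longrightarrow> A \<inter> B = {} \<Longrightarrow> phi (A \<union> B) \<le> phi A + phi B"
    and phi_bnd: "\<And>P. adm M \<Omega> P \<Longrightarrow> (\<Sum>B\<in>P. phi B) \<le> K"
begin

lemma bdd: "A \<in> M \<Longrightarrow> bdd_above {(\<Sum>B\<in>P. phi B) | P. adm M A P}"
proof -
  assume A: "A \<in> M"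
  have "adm M A P \<Longrightarrow> adm M \<Omega> P" for P using sets_into_space[OF A] unfolding adm_def by auto
  then show ?thesis unfolding bdd_above_def using phi_bnd by blast
qed

lemma ne: "{(\<Sum>B\<in>P. phi B) | P. adm M A P} \<noteq> {}"
  unfolding adm_def by (auto intro!: exI[of _ "{}"])

lemma psup_upper: "A \<in> M \<Longrightarrow> adm M A P \<Longrightarrow> (\<Sum>B\<in>P. phi B) \<le> psup M phi A"
  unfolding psup_def by (rule cSup_upper[OF _ bdd]) auto

lemma psup_least: "(\<And>P. adm M A P \<Longrightarrow> (\<Sum>B\<in>P. phi B) \<le> y) \<Longrightarrow> psup M phi A \<le> y"
  unfolding psup_def by (rule cSup_least[OF ne]) auto

lemma psup_ge: "A \<in> M \<Longrightarrow> phi A \<le> psup M phi A"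
  using psup_upper[of A "{A}"] unfolding adm_def by auto

lemma psup_nn: "A \<in> M \<Longrightarrow> 0 \<le> psup M phi A"
  using psup_upper[of A "{}"] unfolding adm_def by auto

lemma psup_le_K: "psup M phi A \<le> K"
  by (rule psup_least) (use phi_bnd sets_into_space in \<open>auto simp: adm_def\<close>)

lemma sum_restrict:
  assumes "adm M A P" "A \<in> M" "B \<in> M"
  shows "(\<Sum>C\<in>P. phi (C \<inter> B)) \<le> psup M phi (A \<inter> B)"
proof -
  have fin: "finite P" and PM: "P \<subseteq> M" and dj: "disjoint P" and sub: "\<Union>P \<subseteq> A"
    using assms(1) unfolding adm_def by auto
  have "(\<Sum>D\<in>(\<lambda>C. C \<inter> B) ` P. phi D) = (\<Sum>C\<in>P. (phi \<circ> (\<lambda>C. C \<inter> B)) C)"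
  proof (rule sum.reindex_nontrivial[OF fin])
    fix x y assume "x \<in> P" "y \<in> P" "x \<noteq> y" "x \<inter> B = y \<inter> B"
    then have "x \<inter> B = {}" using dj unfolding disjoint_def by blast
    then show "phi (x \<inter> B) = 0" using phi_empty by simp
  qed
  then have "(\<Sum>C\<in>P. phi (C \<inter> B)) = (\<Sum>D\<in>(\<lambda>C. C \<inter> B) ` P. phi D)" by simp
  also have "\<dots> \<le> psup M phi (A \<inter> B)"
  proof -
    have "disjoint ((\<lambda>C. C \<inter> B) ` P)"
      using dj unfolding disjoint_def by auto
    moreover have "(\<lambda>C. C \<inter> B) ` P \<subseteq> M" using PM assms(3) by auto
    moreover have "\<Union>((\<lambda>C. C \<inter> B) ` P) \<subseteq> A \<inter> B" using sub by auto
    ultimately have "adm M (A \<inter> B) ((\<lambda>C. C \<inter> B) ` P)"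
      unfolding adm_def using fin by auto
    then show ?thesis using psup_upper assms(2,3) by blast
  qed
  finally show ?thesis .
qed

lemma psup_add:
  assumes A: "A \<in> M" and B: "B \<in> M" and AB: "A \<inter> B = {}"
  shows "psup M phi (A \<union> B) = psup M phi A + psup M phi B"
proof (rule antisym)
  have AuB: "A \<union> B \<in> M" using A B by auto
  show "psup M phi (A \<union> B) \<le> psup M phi A + psup M phi B"
  proof (rule psup_least)
    fix P assume P: "adm M (A \<union> B) P"
    have "(\<Sum>C\<in>P. phi C) \<le> (\<Sum>C\<in>P. phi (C \<inter> A) + phi (C \<inter> B))"
    proof (rule sum_mono)
      fix C assume "C \<in> P"
      then have C: "C \<in> M" "C \<subseteq> A \<union> B" using P unfolding adm_def by auto
      then have "C = (C \<inter> A) \<union> (C \<inter> B)" by auto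
      moreover have "phi ((C \<inter> A) \<union> (C \<inter> B)) \<le> phi (C \<inter> A) + phi (C \<inter> B)"
        using C A B AB by (intro phi_sub) auto
      ultimately show "phi C \<le> phi (C \<inter> A) + phi (C \<inter> B)" by simp
    qed
    also have "\<dots> \<le> psup M phi ((A \<union> B) \<inter> A) + psup M phi ((A \<union> B) \<inter> B)"
      unfolding sum.distrib using sum_restrict[OF P AuB A] sum_restrict[OF P AuB B] by linarith
    finally have "(\<Sum>C\<in>P. phi C) \<le> psup M phi ((A \<union> B) \<inter> A) + psup M phi ((A \<union> B) \<inter> B)" .
    moreover have "(A \<union> B) \<inter> A = A" "(A \<union> B) \<inter> B = B" using AB by auto
    ultimately show "(\<Sum>C\<in>P. phi C) \<le> psup M phi A + psup M phi B" by simp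
  qed
  have key: "(\<Sum>C\<in>P. phi C) + (\<Sum>C\<in>Q. phi C) \<le> psup M phi (A \<union> B)"
    if P: "adm M A P" and Q: "adm M B Q" for P Q
  proof -
    have fin: "finite P" "finite Q" using P Q unfolding adm_def by auto
    have "disjoint (P \<union> Q)"
      unfolding disjoint_def
    proof (intro ballI impI)
      fix a b assume ab: "a \<in> P \<union> Q" "b \<in> P \<union> Q" "a \<noteq> b"
      show "a \<inter> b = {}"
      proof (cases "a \<in> P")
        case aP: True show ?thesis
        proof (cases "b \<in> P")
          case True then show ?thesis using aP ab(3) P unfolding adm_def disjoint_def by auto
        next
          case False then have "b \<subseteq> B" "a \<subseteq> A" using ab aP P Q unfolding adm_def by auto
          then show ?thesis using AB by auto
        qed
      next
        case aQ: False then have aQ': "a \<in> Q" using ab by auto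
        show ?thesis
        proof (cases "b \<in> Q")
          case True then show ?thesis using aQ' ab(3) Q unfolding adm_def disjoint_def by auto
        next
          case False then have "b \<subseteq> A" "a \<subseteq> B" using ab aQ' P Q unfolding adm_def by auto
          then show ?thesis using AB by auto
        qed
      qed
    qed
    then have PQ: "adm M (A \<union> B) (P \<union> Q)"
      using P Q unfolding adm_def by auto
    have "P \<inter> Q \<subseteq> {{}}"
    proof
      fix C assume "C \<in> P \<inter> Q"
      then have "C \<subseteq> A" "C \<subseteq> B" using P Q unfolding adm_def by auto
      then show "C \<in> {{}}" using AB by auto
    qed
    then have z: "(\<Sum>C\<in>P \<inter> Q. phi C) = 0"
      by (metis (no_types, lifting) phi_empty singleton_iff subset_iff sum.neutral)
    have "(\<Sum>C\<in>P. phi C) + (\<Sum>C\<in>Q. phi C) = (\<Sum>C\<in>P \<union> Q. phi C)"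
      using sum.union_inter[OF fin, of phi] z by simp
    also have "\<dots> \<le> psup M phi (A \<union> B)" using psup_upper[OF AuB PQ] .
    finally show ?thesis .
  qed
  have "psup M phi A \<le> psup M phi (A \<union> B) - (\<Sum>C\<in>Q. phi C)" if Q: "adm M B Q" for Q
    by (rule psup_least) (use key[OF _ Q] in force)
  then have "(\<Sum>C\<in>Q. phi C) \<le> psup M phi (A \<union> B) - psup M phi A" if "adm M B Q" for Q
    using that by fastforce
  then have "psup M phi B \<le> psup M phi (A \<union> B) - psup M phi A"
    by (rule psup_least)
  then show "psup M phi A + psup M phi B \<le> psup M phi (A \<union> B)" by simp
qed

lemma psup_fin_add: "fin_add M (psup M phi)"
  unfolding fin_add_def using psup_add by blast

end

context algebra begin

lemma ba_fa: "mu \<in> ba M \<Longrightarrow> fin_add M mu" unfolding ba_def by auto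

lemma ba_bnd: "mu \<in> ba M \<Longrightarrow> \<exists>c. \<forall>A\<in>M. \<bar>mu A\<bar> \<le> c" unfolding ba_def by auto

lemma abs_sum_bound:
  assumes fa: "fin_add M mu" and c: "\<forall>A\<in>M. \<bar>mu A\<bar> \<le> c" and P: "finite P" "P \<subseteq> M" "disjoint P"
  shows "(\<Sum>B\<in>P. \<bar>mu B\<bar>) \<le> 2 * c"
proof -
  let ?Pp = "{B\<in>P. 0 \<le> mu B}" and ?Pn = "{B\<in>P. \<not> 0 \<le> mu B}"
  have d: "disjoint_family_on id ?Pp" "disjoint_family_on id ?Pn"
    using P(3) unfolding disjoint_family_on_def disjoint_def by auto
  have u1: "mu (\<Union>B\<in>?Pp. id B) = (\<Sum>B\<in>?Pp. mu (id B))"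
    by (rule fa_UN[OF fa]) (use P d in \<open>auto simp: id_def\<close>)
  have u2: "mu (\<Union>B\<in>?Pn. id B) = (\<Sum>B\<in>?Pn. mu (id B))"
    by (rule fa_UN[OF fa]) (use P d in \<open>auto simp: id_def\<close>)
  have m1: "(\<Union>B\<in>?Pp. id B) \<in> M" "(\<Union>B\<in>?Pn. id B) \<in> M" using P by auto
  have PU: "P = ?Pp \<union> ?Pn" by auto
  have "(\<Sum>B\<in>P. \<bar>mu B\<bar>) = (\<Sum>B\<in>?Pp. \<bar>mu B\<bar>) + (\<Sum>B\<in>?Pn. \<bar>mu B\<bar>)"
    by (subst PU, rule sum.union_disjoint) (use P(1) in auto)
  also have "(\<Sum>B\<in>?Pp. \<bar>mu B\<bar>) = (\<Sum>B\<in>?Pp. mu B)" by (rule sum.cong) auto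
  also have "(\<Sum>B\<in>?Pn. \<bar>mu B\<bar>) = (\<Sum>B\<in>?Pn. - mu B)" by (rule sum.cong) auto
  also have "(\<Sum>B\<in>?Pn. - mu B) = - (\<Sum>B\<in>?Pn. mu B)" by (simp add: sum_negf)
  also have "(\<Sum>B\<in>?Pp. mu B) + - (\<Sum>B\<in>?Pn. mu B) \<le> 2 * c"
  proof -
    have "\<bar>mu (\<Union>B\<in>?Pp. id B)\<bar> \<le> c" "\<bar>mu (\<Union>B\<in>?Pn. id B)\<bar> \<le> c" using c m1 by auto
    then show ?thesis using u1 u2 by simp
  qed
  finally show ?thesis .
qed

end


context algebra begin

lemma fa_Union: assumes "fin_add M m" "finite P" "P \<subseteq> M" "disjoint P"
  shows "m (\<Union>P) = (\<Sum>C\<in>P. m C)"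
proof -
  have "m (\<Union>C\<in>P. id C) = (\<Sum>C\<in>P. m (id C))"
    by (rule fa_UN[OF assms(1,2)]) (use assms(3,4) in \<open>auto simp: disjoint_family_on_def disjoint_def\<close>)
  then show ?thesis by simp
qed

lemma tv_gen: assumes "mu \<in> ba M" shows "\<exists>K. gen_sup \<Omega> M (\<lambda>B. \<bar>mu B\<bar>) K"
proof -
  obtain c where c: "\<forall>A\<in>M. \<bar>mu A\<bar> \<le> c" using ba_bnd[OF assms] by auto
  have fa: "fin_add M mu" using ba_fa[OF assms] .
  have "gen_sup \<Omega> M (\<lambda>B. \<bar>mu B\<bar>) (2 * c)"
  proof (unfold_locales)
    show "\<bar>mu {}\<bar> = 0" using fa_empty[OF fa] by simp
    show "\<bar>mu (A \<union> B)\<bar> \<le> \<bar>mu A\<bar> + \<bar>mu B\<bar>" if "A \<in> M" "B \<in> M" "A \<inter> B = {}" for A B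
      using fa that unfolding fin_add_def by auto
    show "(\<Sum>B\<in>P. \<bar>mu B\<bar>) \<le> 2 * c" if "adm M \<Omega> P" for P
      using abs_sum_bound[OF fa c] that unfolding adm_def by auto
  qed auto
  then show ?thesis by blast
qed

lemma tv_fa: "mu \<in> ba M \<Longrightarrow> fin_add M (tv M mu)"
  using tv_gen gen_sup.psup_fin_add unfolding tv_psup[abs_def] by metis

lemma tv_nn: "mu \<in> ba M \<Longrightarrow> A \<in> M \<Longrightarrow> 0 \<le> tv M mu A"
  using tv_gen gen_sup.psup_nn unfolding tv_psup by metis

lemma tv_ge: "mu \<in> ba M \<Longrightarrow> A \<in> M \<Longrightarrow> \<bar>mu A\<bar> \<le> tv M mu A"
  using tv_gen gen_sup.psup_ge unfolding tv_psup by metis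

lemma tv_ba: assumes "mu \<in> ba M" shows "tv M mu \<in> ba M"
proof -
  obtain K where "gen_sup \<Omega> M (\<lambda>B. \<bar>mu B\<bar>) K" using tv_gen[OF assms] by auto
  then have "\<forall>A\<in>M. \<bar>tv M mu A\<bar> \<le> K"
    using gen_sup.psup_le_K tv_nn[OF assms] unfolding tv_psup by fastforce
  then show ?thesis unfolding ba_def using tv_fa[OF assms] by auto
qed

lemma tv_mono: "mu \<in> ba M \<Longrightarrow> A \<in> M \<Longrightarrow> B \<in> M \<Longrightarrow> B \<subseteq> A \<Longrightarrow> tv M mu B \<le> tv M mu A"
  using fa_mono[OF tv_fa] tv_nn by metis

lemma nn_mono: "fin_add M m \<Longrightarrow> (\<And>A. A \<in> M \<Longrightarrow> 0 \<le> m A) \<Longrightarrow> A \<in> M \<Longrightarrow> m A \<le> m \<Omega>"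
  using fa_mono[of m \<Omega> A] sets_into_space by auto

lemma trunc:
  fixes m nu tau :: "'a set \<Rightarrow> real"
  assumes fam: "fin_add M m" and mnn: "\<And>A. A \<in> M \<Longrightarrow> 0 \<le> m A"
    and fanu: "fin_add M nu" and nunn: "\<And>A. A \<in> M \<Longrightarrow> 0 \<le> nu A"
    and mtau: "\<And>A. A \<in> M \<Longrightarrow> m A \<le> tau A"
    and ac: "\<forall>\<epsilon>>0. \<exists>\<delta>>0. \<forall>A\<in>M. nu A < \<delta> \<longrightarrow> tau A < \<epsilon>"
    and e: "e > 0"
  shows "\<exists>k\<ge>0. \<exists>s. fin_add M s \<and> (\<forall>A\<in>M. 0 \<le> s A \<and> s A \<le> k * nu A \<and> \<bar>m A - s A\<bar> \<le> e)"
proof -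
  obtain d where d: "d > 0" "\<forall>A\<in>M. nu A < d \<longrightarrow> tau A < e" using ac e by auto
  define k where "k = m \<Omega> / d + 1"
  have mO: "0 \<le> m \<Omega>" using mnn by auto
  have k: "k > 0" unfolding k_def using mO d by (simp add: add_nonneg_pos)
  define phi where "phi C = max 0 (m C - k * nu C)" for C
  interpret G: gen_sup \<Omega> M phi "m \<Omega>"
  proof (unfold_locales)
    show "0 \<le> phi A" for A unfolding phi_def by simp
    show "phi {} = 0" unfolding phi_def using fa_empty[OF fam] fa_empty[OF fanu] by simp
    show "phi (A \<union> B) \<le> phi A + phi B" if "A \<in> M" "B \<in> M" "A \<inter> B = {}" for A B
      using fam fanu that unfolding fin_add_def phi_def by (auto simp: algebra_simps)
    show "(\<Sum>B\<in>P. phi B) \<le> m \<Omega>" if P: "adm M \<Omega> P" for P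
    proof -
      have "(\<Sum>B\<in>P. phi B) \<le> (\<Sum>B\<in>P. m B)"
        using P k nunn mnn unfolding adm_def phi_def
        by (intro sum_mono) (auto simp: subset_iff intro!: mult_nonneg_nonneg)
      also have "\<dots> = m (\<Union>P)"
        using fa_Union[OF fam] P unfolding adm_def by auto
      also have "\<dots> \<le> m \<Omega>"
        using P by (intro nn_mono[OF fam mnn]) (auto simp: adm_def)
      finally show ?thesis .
    qed
  qed
  define r where "r = psup M phi"
  have rsmall: "r \<Omega> \<le> e"
    unfolding r_def
  proof (rule G.psup_least)
    fix P assume P: "adm M \<Omega> P"
    let ?P' = "{C\<in>P. k * nu C < m C}"
    have fin: "finite P" "P \<subseteq> M" using P unfolding adm_def by auto
    have dj: "disjoint ?P'" using P unfolding adm_def disjoint_def by auto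
    let ?U = "\<Union>?P'"
    have fP: "finite ?P'" "?P' \<subseteq> M" using fin by auto
    have UM: "?U \<in> M" using fP by auto
    have mU: "m ?U = (\<Sum>C\<in>?P'. m C)" by (rule fa_Union[OF fam fP dj])
    have nU: "nu ?U = (\<Sum>C\<in>?P'. nu C)" by (rule fa_Union[OF fanu fP dj])
    have "(\<Sum>C\<in>P. phi C) = (\<Sum>C\<in>?P'. phi C)"
      by (rule sum.mono_neutral_right) (use fin in \<open>auto simp: phi_def\<close>)
    also have "\<dots> = (\<Sum>C\<in>?P'. m C - k * nu C)" by (rule sum.cong) (auto simp: phi_def)
    also have "\<dots> = m ?U - k * nu ?U" using mU nU by (simp add: sum_subtractf sum_distrib_left)
    finally have eq: "(\<Sum>C\<in>P. phi C) = m ?U - k * nu ?U" .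
    show "(\<Sum>C\<in>P. phi C) \<le> e"
    proof (cases "m ?U \<le> k * nu ?U")
      case True then show ?thesis using eq e by simp
    next
      case False
      have "m ?U \<le> m \<Omega>" using nn_mono[OF fam mnn UM] .
      then have "k * nu ?U < m \<Omega>" using False by simp
      then have "nu ?U < m \<Omega> / k" using k by (simp add: field_simps)
      also have "m \<Omega> / k \<le> d" using k d mO unfolding k_def by (simp add: field_simps)
      finally have "tau ?U < e" using d UM by auto
      moreover have "0 \<le> k * nu ?U" using k nunn[OF UM] by simp
      ultimately show ?thesis using eq mtau[OF UM] by linarith
    qed
  qed
  define s where "s A = m A - r A" for A
  have rfa: "fin_add M r" unfolding r_def by (rule G.psup_fin_add)
  have sfa: "fin_add M s" unfolding s_def using fin_add_lin[OF fam rfa, of 1 "-1"] by simp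
  have "0 \<le> s A \<and> s A \<le> k * nu A \<and> \<bar>m A - s A\<bar> \<le> e" if A: "A \<in> M" for A
  proof -
    have "r A \<le> m A" unfolding r_def
    proof (rule G.psup_least)
      fix P assume P: "adm M A P"
      have "(\<Sum>B\<in>P. phi B) \<le> (\<Sum>B\<in>P. m B)"
        using P k nunn mnn unfolding adm_def phi_def
        by (intro sum_mono) (auto simp: subset_iff intro!: mult_nonneg_nonneg)
      also have "\<dots> = m (\<Union>P)"
        using fa_Union[OF fam] P unfolding adm_def by auto
      also have "\<dots> \<le> m A"
        using P A by (intro fa_mono[OF fam mnn]) (auto simp: adm_def)
      finally show "(\<Sum>B\<in>P. phi B) \<le> m A" .
    qed
    moreover have "phi A \<le> r A" unfolding r_def by (rule G.psup_ge[OF A])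
    moreover have "0 \<le> r A" "r A \<le> r \<Omega>" unfolding r_def using G.psup_nn[OF A]
      using fa_mono[OF G.psup_fin_add G.psup_nn] A sets_into_space[OF A] by auto
    ultimately show ?thesis using rsmall unfolding s_def phi_def by auto
  qed
  then show ?thesis using sfa k by (intro exI[of _ k]) auto
qed

end


lemma Qid: fixes a b x y :: real assumes "x > 0" "y > 0"
  shows "a^2/x + b^2/y - (a+b)^2/(x+y) = x * (a/x - (a+b)/(x+y))^2 + y * (b/y - (a+b)/(x+y))^2"
proof -
  have "x + y > 0" using assms by simp
  then show ?thesis using assms
    by (simp add: divide_simps power2_eq_square) algebra
qed

lemma absd: fixes d t :: real assumes "t > 0" shows "\<bar>d\<bar> \<le> t + d^2/t"
proof -
  have "0 \<le> (\<bar>d\<bar> - t)^2" by simp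
  then have "2*t*\<bar>d\<bar> \<le> t^2 + d^2" by (simp add: power2_eq_square algebra_simps)
  moreover have "0 \<le> t*\<bar>d\<bar>" using assms by simp
  ultimately have "t*\<bar>d\<bar> \<le> t^2 + d^2" by linarith
  then show ?thesis using assms by (simp add: field_simps power2_eq_square)
qed

lemma cell_ineq:
  fixes a b x y t C :: real
  assumes x: "x \<ge> 0" and y: "y \<ge> 0" and a: "\<bar>a\<bar> \<le> C*x" and b: "\<bar>b\<bar> \<le> C*y" and t: "t > 0"
  shows "\<bar>a - (a+b)/(x+y)*x\<bar> \<le> t*x + (a^2/x + b^2/y - (a+b)^2/(x+y))/t"
proof (cases "x = 0")
  case True
  then have "a = 0" using a by simp
  then show ?thesis using True by simp
next
  case xp: False
  show ?thesis
  proof (cases "y = 0")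
    case True
    then have "b = 0" using b by simp
    then show ?thesis using True xp x t by (simp add: power2_eq_square)
  next
    case False
    have xp': "x > 0" "y > 0" using xp False x y by auto
    let ?d = "a/x - (a+b)/(x+y)"
    have Q: "a^2/x + b^2/y - (a+b)^2/(x+y) \<ge> x * ?d^2" using Qid[OF xp'] xp' by simp
    have "x * ?d = x*(a/x) - x*((a+b)/(x+y))" by (simp add: right_diff_distrib)
    also have "x*(a/x) = a" using xp' by simp
    finally have "a - (a+b)/(x+y)*x = x * ?d" by simp
    then have "\<bar>a - (a+b)/(x+y)*x\<bar> = x * \<bar>?d\<bar>" using xp' by (simp add: abs_mult)
    also have "\<dots> \<le> x * (t + ?d^2/t)" using absd[OF t, of ?d] xp' by (simp add: mult_left_mono)
    also have "\<dots> = t*x + (x * ?d^2)/t" by (simp add: algebra_simps)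
    also have "\<dots> \<le> t*x + (a^2/x + b^2/y - (a+b)^2/(x+y))/t" using Q t by (simp add: divide_right_mono)
    finally show ?thesis .
  qed
qed

context algebra begin

lemma fa_split: "fin_add M mu \<Longrightarrow> X \<in> M \<Longrightarrow> A \<in> M \<Longrightarrow> mu X = mu (X \<inter> A) + mu (X - A)"
proof -
  assume a: "fin_add M mu" "X \<in> M" "A \<in> M"
  have m: "X \<inter> A \<in> M" "X - A \<in> M" "(X \<inter> A) \<inter> (X - A) = {}" using a by auto
  have "mu ((X \<inter> A) \<union> (X - A)) = mu (X \<inter> A) + mu (X - A)"
    using a(1) m unfolding fin_add_def by blast
  moreover have "(X \<inter> A) \<union> (X - A) = X" by auto
  ultimately show ?thesis by simp
qed

definition ipart :: "nat \<Rightarrow> (nat \<Rightarrow> 'a set) \<Rightarrow> bool" where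
  "ipart n B \<longleftrightarrow> (\<forall>i<n. B i \<in> M) \<and> disjoint_family_on B {..<n} \<and> (\<Union>i<n. B i) = \<Omega>"

lemma energy:
  fixes rho nu :: "'a set \<Rightarrow> real"
  assumes farho: "fin_add M rho" and fanu: "fin_add M nu" and nunn: "\<And>A. A \<in> M \<Longrightarrow> 0 \<le> nu A"
    and bnd: "\<And>A. A \<in> M \<Longrightarrow> \<bar>rho A\<bar> \<le> C * nu A" and e: "e > 0"
  shows "\<exists>n B. ipart n B \<and> (\<forall>A\<in>M. \<bar>rho A - (\<Sum>i<n. rho (B i) / nu (B i) * nu (B i \<inter> A))\<bar> \<le> e)"
proof -
  define En where "En n (B :: nat \<Rightarrow> 'a set) = (\<Sum>i<n. (rho (B i))^2 / nu (B i))" for n B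
  have cellb: "(rho A)^2 / nu A \<le> C^2 * nu A" if "A \<in> M" for A
  proof (cases "nu A = 0")
    case False
    then have p: "nu A > 0" using nunn[OF that] by simp
    have "\<bar>rho A\<bar>^2 \<le> (C * nu A)^2" using bnd[OF that] by (intro power_mono) auto
    then have "(rho A)^2 \<le> C^2 * nu A * nu A" by (simp add: power2_eq_square mult_ac)
    then show ?thesis using p by (simp add: divide_simps)
  qed (use nunn that in simp)
  have Ebnd: "En n B \<le> C^2 * nu \<Omega>" if "ipart n B" for n B
  proof -
    have "En n B \<le> (\<Sum>i<n. C^2 * nu (B i))" unfolding En_def
      using that cellb unfolding ipart_def by (intro sum_mono) auto
    also have "\<dots> = C^2 * nu (\<Union>i<n. B i)"
      using fa_UN[OF fanu, of "{..<n}" B] that unfolding ipart_def by (simp add: sum_distrib_left)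
    finally show ?thesis using that unfolding ipart_def by simp
  qed
  let ?Es = "{En n B | n B. ipart n B}"
  have bddE: "bdd_above ?Es" using Ebnd unfolding bdd_above_def by blast
  have p1: "ipart 1 (\<lambda>_. \<Omega>)" unfolding ipart_def by (auto simp: disjoint_family_on_def)
  have neE: "?Es \<noteq> {}" using p1 by blast
  define S where "S = Sup ?Es"
  have Sup: "En n B \<le> S" if "ipart n B" for n B
    unfolding S_def using that by (intro cSup_upper[OF _ bddE]) auto
  have nuO: "0 \<le> nu \<Omega>" using nunn by auto
  define t where "t = e / (2 * (nu \<Omega> + 1))"
  have t: "t > 0" unfolding t_def using e nuO by (simp add: add_nonneg_pos)
  have tnu: "t * nu \<Omega> \<le> e / 2" unfolding t_def using e nuO by (simp add: field_simps)
  define eta where "eta = t * e / 2"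
  have eta: "eta > 0" unfolding eta_def using t e by simp
  obtain n B where nB: "ipart n B" "En n B > S - eta"
  proof -
    have "S - eta < S" using eta by simp
    then obtain y where "y \<in> ?Es" "S - eta < y" using less_cSup_iff[OF neE bddE] unfolding S_def by blast
    then show ?thesis using that by blast
  qed
  have BM: "\<And>i. i < n \<Longrightarrow> B i \<in> M" and Bdj: "disjoint_family_on B {..<n}" and BU: "(\<Union>i<n. B i) = \<Omega>"
    using nB(1) unfolding ipart_def by auto
  have "\<bar>rho A - (\<Sum>i<n. rho (B i) / nu (B i) * nu (B i \<inter> A))\<bar> \<le> e" if A: "A \<in> M" for A
  proof -
    define B' where "B' i = (if i < n then B i \<inter> A else B (i - n) - A)" for i
    have B'M: "i < n + n \<Longrightarrow> B' i \<in> M" for i using BM A unfolding B'_def by (auto intro!: Int Diff)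
    have B'dj: "disjoint_family_on B' {..<n+n}"
      unfolding disjoint_family_on_def
    proof (intro ballI impI)
      fix i j assume ij: "i \<in> {..<n+n}" "j \<in> {..<n+n}" "i \<noteq> j"
      have dB: "k < n \<Longrightarrow> l < n \<Longrightarrow> k \<noteq> l \<Longrightarrow> B k \<inter> B l = {}" for k l
        using Bdj unfolding disjoint_family_on_def by auto
      have hij: "i - n \<noteq> j - n" if "\<not> i < n" "\<not> j < n" using ij that by auto
      have lt: "i - n < n" "j - n < n" using ij by auto
      show "B' i \<inter> B' j = {}"
        using ij hij lt dB[of i j] dB[of "i - n" "j - n"] dB[of i "j - n"] dB[of "i - n" j]
        unfolding B'_def by (cases "i < n"; cases "j < n") auto
    qed
    have B'U: "(\<Union>i<n+n. B' i) = \<Omega>"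
    proof
      show "(\<Union>i<n+n. B' i) \<subseteq> \<Omega>" using B'M sets_into_space by blast
      show "\<Omega> \<subseteq> (\<Union>i<n+n. B' i)"
      proof
        fix x assume "x \<in> \<Omega>"
        then obtain i where i: "i < n" "x \<in> B i" using BU by auto
        show "x \<in> (\<Union>i<n+n. B' i)"
        proof (cases "x \<in> A")
          case True then show ?thesis using i by (intro UN_I[of i]) (auto simp: B'_def)
        next
          case False then show ?thesis using i by (intro UN_I[of "i + n"]) (auto simp: B'_def)
        qed
      qed
    qed
    have p': "ipart (n+n) B'" unfolding ipart_def using B'M B'dj B'U by auto
    let ?a = "\<lambda>i. rho (B i \<inter> A)" and ?b = "\<lambda>i. rho (B i - A)"
    let ?x = "\<lambda>i. nu (B i \<inter> A)" and ?y = "\<lambda>i. nu (B i - A)"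
    have rB: "rho (B i) = ?a i + ?b i" and nB': "nu (B i) = ?x i + ?y i" if "i < n" for i
      using fa_split[OF farho BM[OF that] A] fa_split[OF fanu BM[OF that] A] by auto
    have "En (n+n) B' = (\<Sum>i<n. (rho (B' i))^2 / nu (B' i)) + (\<Sum>i\<in>{n..<n+n}. (rho (B' i))^2 / nu (B' i))"
      unfolding En_def using sum.atLeastLessThan_concat[of 0 n "n+n" "\<lambda>i. (rho (B' i))^2 / nu (B' i)"]
      by (simp add: atLeast0LessThan)
    also have "(\<Sum>i\<in>{n..<n+n}. (rho (B' i))^2 / nu (B' i)) = (\<Sum>i<n. (?b i)^2 / ?y i)"
    proof -
      have "(\<Sum>i\<in>{0+n..<n+n}. (rho (B' i))^2 / nu (B' i)) = (\<Sum>i\<in>{0..<n}. (rho (B' (i+n)))^2 / nu (B' (i+n)))"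
        by (rule sum.shift_bounds_nat_ivl)
      then show ?thesis by (simp add: B'_def atLeast0LessThan)
    qed
    also have "(\<Sum>i<n. (rho (B' i))^2 / nu (B' i)) = (\<Sum>i<n. (?a i)^2 / ?x i)"
      by (rule sum.cong) (auto simp: B'_def)
    finally have E': "En (n+n) B' = (\<Sum>i<n. (?a i)^2 / ?x i) + (\<Sum>i<n. (?b i)^2 / ?y i)" .
    have rA: "rho A = (\<Sum>i<n. ?a i)"
    proof -
      have "rho (\<Union>i<n. B i \<inter> A) = (\<Sum>i<n. ?a i)"
        by (rule fa_UN[OF farho]) (use BM A Bdj in \<open>auto simp: disjoint_family_on_def\<close>)
      moreover have "(\<Union>i<n. B i \<inter> A) = A" using BU sets_into_space[OF A] by auto
      ultimately show ?thesis by simp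
    qed
    have xA: "(\<Sum>i<n. ?x i) = nu A"
    proof -
      have "nu (\<Union>i<n. B i \<inter> A) = (\<Sum>i<n. ?x i)"
        by (rule fa_UN[OF fanu]) (use BM A Bdj in \<open>auto simp: disjoint_family_on_def\<close>)
      moreover have "(\<Union>i<n. B i \<inter> A) = A" using BU sets_into_space[OF A] by auto
      ultimately show ?thesis by simp
    qed
    have "\<bar>rho A - (\<Sum>i<n. rho (B i) / nu (B i) * nu (B i \<inter> A))\<bar>
        = \<bar>\<Sum>i<n. ?a i - (?a i + ?b i) / (?x i + ?y i) * ?x i\<bar>"
      unfolding rA sum_subtractf[symmetric] by (intro arg_cong[where f=abs] sum.cong) (auto simp: rB nB')
    also have "\<dots> \<le> (\<Sum>i<n. \<bar>?a i - (?a i + ?b i) / (?x i + ?y i) * ?x i\<bar>)" by (rule sum_abs)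
    also have "\<dots> \<le> (\<Sum>i<n. t * ?x i + ((?a i)^2 / ?x i + (?b i)^2/ ?y i - (?a i + ?b i)^2/(?x i + ?y i)) / t)"
    proof (rule sum_mono)
      fix i assume "i \<in> {..<n}"
      then have i: "i < n" by simp
      have m1: "B i \<inter> A \<in> M" "B i - A \<in> M" using BM[OF i] A by auto
      show "\<bar>?a i - (?a i + ?b i) / (?x i + ?y i) * ?x i\<bar> \<le> t * ?x i + ((?a i)^2 / ?x i + (?b i)^2/ ?y i - (?a i + ?b i)^2/(?x i + ?y i)) / t"
        by (rule cell_ineq[OF nunn[OF m1(1)] nunn[OF m1(2)] bnd[OF m1(1)] bnd[OF m1(2)] t])
    qed
    also have "\<dots> = t * nu A + (En (n+n) B' - En n B) / t"
    proof -
      have EnB: "En n B = (\<Sum>i<n. (?a i + ?b i)^2/(?x i + ?y i))" unfolding En_def by (rule sum.cong) (auto simp: rB nB')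
      have "(\<Sum>i<n. t * ?x i + ((?a i)^2 / ?x i + (?b i)^2/ ?y i - (?a i + ?b i)^2/(?x i + ?y i)) / t)
          = t * (\<Sum>i<n. ?x i) + (\<Sum>i<n. ((?a i)^2 / ?x i + (?b i)^2/ ?y i - (?a i + ?b i)^2/(?x i + ?y i))) / t"
        by (simp only: sum.distrib sum_distrib_left sum_divide_distrib)
      also have "(\<Sum>i<n. ((?a i)^2 / ?x i + (?b i)^2/ ?y i - (?a i + ?b i)^2/(?x i + ?y i))) = En (n+n) B' - En n B"
        unfolding E' EnB by (simp only: sum.distrib sum_subtractf)
      finally show ?thesis using xA by simp
    qed
    also have "\<dots> \<le> t * nu \<Omega> + eta / t"
    proof -
      have "nu A \<le> nu \<Omega>" using nn_mono[OF fanu nunn A] .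
      moreover have "En (n+n) B' - En n B \<le> eta" using Sup[OF p'] nB(2) by simp
      ultimately have "t * nu A \<le> t * nu \<Omega>" "(En (n+n) B' - En n B) / t \<le> eta / t"
        using t by (auto intro: mult_left_mono divide_right_mono)
      then show ?thesis by linarith
    qed
    also have "\<dots> \<le> e" using tnu t unfolding eta_def by simp
    finally show ?thesis .
  qed
  then show ?thesis using nB(1) by blast
qed

end



lemma frac_lt: fixes e T :: real assumes "e > 0" "T \<ge> 0" shows "T * (e / (T + 1)) < e"
proof -
  have "T * (e / (T + 1)) = e * (T / (T+1))" by simp
  also have "T / (T+1) < 1" using assms by simp
  then have "e * (T / (T+1)) < e * 1" using assms by (intro mult_strict_left_mono) auto
  finally show ?thesis by simp
qed

lemma halves2: fixes T e :: real shows "((e::real) / (2 * (T + 1)) + e / (2 * (T + 1))) * T = T * (e / (T + 1))"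
proof -
  have "e / (2 * (T + 1)) = (e / (T + 1)) / 2" by simp
  then have "e / (2 * (T + 1)) + e / (2 * (T + 1)) = e / (T + 1)" by (metis field_sum_of_halves)
  then show ?thesis by simp
qed

lemma ex_inv: "(r::real) > 0 \<Longrightarrow> \<exists>N. \<forall>n\<ge>N. inverse (real (Suc n)) < r"
  using LIMSEQ_D[OF LIMSEQ_inverse_real_of_nat, of r] by auto

lemma le_eps: fixes x y C :: real assumes "\<And>e. e > 0 \<Longrightarrow> x \<le> y + e * C" shows "x \<le> y"
proof (rule field_le_epsilon)
  fix e :: real assume e: "e > 0"
  have p: "e / (\<bar>C\<bar> + 1) > 0" using e by (simp add: add_nonneg_pos)
  have "x \<le> y + (e / (\<bar>C\<bar> + 1)) * C" using assms[OF p] .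
  also have "(e / (\<bar>C\<bar> + 1)) * C \<le> e"
  proof -
    have "(e / (\<bar>C\<bar> + 1)) * C \<le> (e / (\<bar>C\<bar> + 1)) * \<bar>C\<bar>" using e by (intro mult_left_mono) auto
    also have "\<dots> \<le> e" using e by (simp add: field_simps)
    finally show ?thesis .
  qed
  finally show "x \<le> y + e" by simp
qed

lemma lim_transfer:
  fixes X Y :: "nat \<Rightarrow> real"
  assumes "X \<longlonglongrightarrow> l" "\<And>r. r > 0 \<Longrightarrow> \<exists>N. \<forall>n\<ge>N. \<bar>Y n - X n\<bar> \<le> r"
  shows "Y \<longlonglongrightarrow> l"
proof (rule LIMSEQ_I)
  fix r :: real assume r: "r > 0"
  obtain N1 where N1: "\<forall>n\<ge>N1. norm (X n - l) < r/2" using LIMSEQ_D[OF assms(1), of "r/2"] r by auto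
  obtain N2 where N2: "\<forall>n\<ge>N2. \<bar>Y n - X n\<bar> \<le> r/4" using assms(2)[of "r/4"] r by auto
  have "\<forall>n\<ge>max N1 N2. norm (Y n - l) < r"
  proof (intro allI impI)
    fix n assume "n \<ge> max N1 N2"
    then have "norm (X n - l) < r/2" "\<bar>Y n - X n\<bar> \<le> r/4" using N1 N2 by auto
    moreover have "\<bar>Y n - l\<bar> \<le> \<bar>Y n - X n\<bar> + \<bar>X n - l\<bar>" using abs_triangle_ineq[of "Y n - X n" "X n - l"] by simp
    ultimately show "norm (Y n - l) < r" using r by simp
  qed
  then show "\<exists>no. \<forall>n\<ge>no. norm (Y n - l) < r" by blast
qed


context algebra begin

definition approx_seq :: "('a \<Rightarrow> real) \<Rightarrow> (nat \<Rightarrow> 'a \<Rightarrow> real) \<Rightarrow> bool" where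
  "approx_seq h s \<longleftrightarrow> (\<forall>n. simple_fn \<Omega> M (s n)) \<and> (\<forall>\<epsilon>>0. \<exists>N. \<forall>n\<ge>N. \<forall>x\<in>\<Omega>. \<bar>h x - s n x\<bar> \<le> \<epsilon>)"

lemma fa_int_def': "fa_int \<Omega> M mu h = (THE l. \<forall>s. approx_seq h s \<longrightarrow> (\<lambda>n. sint \<Omega> mu (s n)) \<longlonglongrightarrow> l)"
  unfolding fa_int_def approx_seq_def ..


end



context algebra begin
lemma sint_bound:
  assumes "mu \<in> ba M" "simple_fn \<Omega> M s" "\<And>x. x \<in> \<Omega> \<Longrightarrow> \<bar>s x\<bar> \<le> K"
  shows "\<bar>sint \<Omega> mu s\<bar> \<le> K * tv M mu \<Omega>"
proof -
  have "\<bar>sint \<Omega> mu s\<bar> \<le> sint \<Omega> (tv M mu) (\<lambda>x. \<bar>s x\<bar>)"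
    by (rule sint_abs_le[OF ba_fa[OF assms(1)] tv_fa[OF assms(1)] tv_ge[OF assms(1)] assms(2)])
  also have "\<dots> \<le> sint \<Omega> (tv M mu) (\<lambda>x. K)"
    by (rule sint_mono[OF tv_fa[OF assms(1)] tv_nn[OF assms(1)] simple_map[OF assms(2)] simple_const])
      (use assms(3) in auto)
  also have "\<dots> = K * tv M mu \<Omega>" by (rule sint_const[OF tv_fa[OF assms(1)]])
  finally show ?thesis .
qed

lemma tvO_nn: "mu \<in> ba M \<Longrightarrow> 0 \<le> tv M mu \<Omega>" using tv_nn by auto

lemma sint_close:
  assumes "mu \<in> ba M" "simple_fn \<Omega> M s" "simple_fn \<Omega> M t" "\<And>x. x \<in> \<Omega> \<Longrightarrow> \<bar>s x - t x\<bar> \<le> K"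
  shows "\<bar>sint \<Omega> mu s - sint \<Omega> mu t\<bar> \<le> K * tv M mu \<Omega>"
  using sint_bound[OF assms(1) simple_comb[OF assms(2,3), of "(-)"] assms(4)]
    sint_diff[OF ba_fa[OF assms(1)] assms(2,3)] by simp

lemma bfun_seq:
  assumes "bfun \<Omega> M h"
  shows "\<exists>s. (\<forall>n. simple_fn \<Omega> M (s n)) \<and> (\<forall>n. \<forall>x\<in>\<Omega>. \<bar>h x - s n x\<bar> \<le> inverse (real (Suc n)))"
proof -
  have "\<forall>n. \<exists>t. simple_fn \<Omega> M t \<and> (\<forall>x\<in>\<Omega>. \<bar>h x - t x\<bar> < inverse (real (Suc n)))"
    using assms unfolding bfun_def by auto
  then obtain s where "\<forall>n. simple_fn \<Omega> M (s n) \<and> (\<forall>x\<in>\<Omega>. \<bar>h x - s n x\<bar> < inverse (real (Suc n)))"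
    by metis
  then show ?thesis by (intro exI[of _ s]) (auto intro: less_imp_le)
qed

lemma inv_mono: "N \<le> n \<Longrightarrow> inverse (real (Suc n)) \<le> inverse (real (Suc N))"
  by (simp add: le_imp_inverse_le)


end



context algebra begin
lemma fa_int_char:
  assumes mu: "mu \<in> ba M" and h: "bfun \<Omega> M h"
  shows "\<forall>s. approx_seq h s \<longrightarrow> (\<lambda>n. sint \<Omega> mu (s n)) \<longlonglongrightarrow> fa_int \<Omega> M mu h"
proof -
  define T where "T = tv M mu \<Omega>"
  have T: "0 \<le> T" unfolding T_def using tvO_nn[OF mu] .
  obtain t where t: "\<And>n. simple_fn \<Omega> M (t n)" "\<And>n x. x \<in> \<Omega> \<Longrightarrow> \<bar>h x - t n x\<bar> \<le> inverse (real (Suc n))"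
    using bfun_seq[OF h] by blast
  have "Cauchy (\<lambda>n. sint \<Omega> mu (t n))"
  proof (rule CauchyI)
    fix e :: real assume e: "e > 0"
    obtain N where N: "\<forall>n\<ge>N. inverse (real (Suc n)) < e / (2 * (T + 1))"
      using ex_inv[of "e / (2 * (T+1))"] e T by (auto simp: add_nonneg_pos)
    have "norm (sint \<Omega> mu (t m) - sint \<Omega> mu (t n)) < e" if "m \<ge> N" "n \<ge> N" for m n
    proof -
      have "\<bar>sint \<Omega> mu (t m) - sint \<Omega> mu (t n)\<bar> \<le> (e / (2 * (T + 1)) + e / (2 * (T + 1))) * T"
      proof (rule sint_close[OF mu t(1) t(1), folded T_def])
        fix x assume x: "x \<in> \<Omega>"
        have "\<bar>t m x - t n x\<bar> \<le> \<bar>h x - t m x\<bar> + \<bar>h x - t n x\<bar>" by simp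
        also have "\<dots> \<le> e / (2 * (T + 1)) + e / (2 * (T + 1))"
        proof -
          have "inverse (real (Suc m)) < e / (2 * (T + 1))" "inverse (real (Suc n)) < e / (2 * (T + 1))"
            using N that by auto
          then show ?thesis using t(2)[OF x, of m] t(2)[OF x, of n] by linarith
        qed
        finally show "\<bar>t m x - t n x\<bar> \<le> e / (2 * (T + 1)) + e / (2 * (T + 1))" .
      qed
      also have "\<dots> = T * (e / (T + 1))" by (rule halves2)
      also have "\<dots> < e" using frac_lt[OF e T] .
      finally show ?thesis by simp
    qed
    then show "\<exists>M. \<forall>m\<ge>M. \<forall>n\<ge>M. norm (sint \<Omega> mu (t m) - sint \<Omega> mu (t n)) < e" by blast
  qed
  then obtain l where l: "(\<lambda>n. sint \<Omega> mu (t n)) \<longlonglongrightarrow> l"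
    using Cauchy_convergent_iff convergent_def by blast
  have P: "\<forall>s. approx_seq h s \<longrightarrow> (\<lambda>n. sint \<Omega> mu (s n)) \<longlonglongrightarrow> l"
  proof (intro allI impI)
    fix s assume s: "approx_seq h s"
    show "(\<lambda>n. sint \<Omega> mu (s n)) \<longlonglongrightarrow> l"
    proof (rule lim_transfer[OF l])
      fix r :: real assume r: "r > 0"
      define q where "q = r / (2 * (T + 1))"
      have q: "q > 0" unfolding q_def using r T by (simp add: add_nonneg_pos)
      obtain N1 where N1: "\<forall>n\<ge>N1. \<forall>x\<in>\<Omega>. \<bar>h x - s n x\<bar> \<le> q" using s q unfolding approx_seq_def by auto
      obtain N2 where N2: "\<forall>n\<ge>N2. inverse (real (Suc n)) < q" using ex_inv[OF q] by auto
      have "\<bar>sint \<Omega> mu (s n) - sint \<Omega> mu (t n)\<bar> \<le> r" if "n \<ge> max N1 N2" for n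
      proof -
        have "\<bar>sint \<Omega> mu (s n) - sint \<Omega> mu (t n)\<bar> \<le> (q + q) * T"
        proof (rule sint_close[OF mu _ t(1), folded T_def])
          show "simple_fn \<Omega> M (s n)" using s unfolding approx_seq_def by auto
          fix x assume x: "x \<in> \<Omega>"
          have "\<bar>s n x - t n x\<bar> \<le> \<bar>h x - s n x\<bar> + \<bar>h x - t n x\<bar>" by simp
          also have "\<dots> \<le> q + q"
          proof -
            have "\<bar>h x - s n x\<bar> \<le> q" "inverse (real (Suc n)) < q" using N1 N2 that x by auto
            then show ?thesis using t(2)[OF x, of n] by linarith
          qed
          finally show "\<bar>s n x - t n x\<bar> \<le> q + q" .
        qed
        also have "\<dots> = T * (r / (T + 1))" unfolding q_def by (rule halves2)
        also have "\<dots> \<le> r" using frac_lt[OF r T] by simp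
        finally show ?thesis .
      qed
      then show "\<exists>N. \<forall>n\<ge>N. \<bar>sint \<Omega> mu (s n) - sint \<Omega> mu (t n)\<bar> \<le> r" by blast
    qed
  qed
  have ts: "approx_seq h t"
    unfolding approx_seq_def
  proof (intro conjI allI impI)
    show "simple_fn \<Omega> M (t n)" for n by (rule t(1))
    fix e :: real assume "e > 0"
    then obtain N where N: "\<forall>n\<ge>N. inverse (real (Suc n)) < e" using ex_inv by blast
    then show "\<exists>N. \<forall>n\<ge>N. \<forall>x\<in>\<Omega>. \<bar>h x - t n x\<bar> \<le> e" using t(2) by (meson less_imp_le order_trans)
  qed
  have "fa_int \<Omega> M mu h = l"
    unfolding fa_int_def'
  proof (rule the_equality)
    show "\<forall>s. approx_seq h s \<longrightarrow> (\<lambda>n. sint \<Omega> mu (s n)) \<longlonglongrightarrow> l" by (rule P)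
  next
    fix l' assume "\<forall>s. approx_seq h s \<longrightarrow> (\<lambda>n. sint \<Omega> mu (s n)) \<longlonglongrightarrow> l'"
    then have "(\<lambda>n. sint \<Omega> mu (t n)) \<longlonglongrightarrow> l'" using ts by auto
    then show "l' = l" using l LIMSEQ_unique by blast
  qed
  then show ?thesis using P by simp
qed


end



context algebra begin
lemma fa_int_approx:
  assumes mu: "mu \<in> ba M" and h: "bfun \<Omega> M h" and s: "simple_fn \<Omega> M s"
    and e: "\<And>x. x \<in> \<Omega> \<Longrightarrow> \<bar>h x - s x\<bar> \<le> e"
  shows "\<bar>fa_int \<Omega> M mu h - sint \<Omega> mu s\<bar> \<le> e * tv M mu \<Omega>"
proof -
  define T where "T = tv M mu \<Omega>"
  obtain t where t: "\<And>n. simple_fn \<Omega> M (t n)" "\<And>n x. x \<in> \<Omega> \<Longrightarrow> \<bar>h x - t n x\<bar> \<le> inverse (real (Suc n))"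
    using bfun_seq[OF h] by blast
  have ts: "approx_seq h t"
    unfolding approx_seq_def
  proof (intro conjI allI impI)
    show "simple_fn \<Omega> M (t n)" for n by (rule t(1))
    fix e :: real assume "e > 0"
    then obtain N where N: "\<forall>n\<ge>N. inverse (real (Suc n)) < e" using ex_inv by blast
    then show "\<exists>N. \<forall>n\<ge>N. \<forall>x\<in>\<Omega>. \<bar>h x - t n x\<bar> \<le> e" using t(2) by (meson less_imp_le order_trans)
  qed
  have L: "(\<lambda>n. sint \<Omega> mu (t n)) \<longlonglongrightarrow> fa_int \<Omega> M mu h" using fa_int_char[OF mu h] ts by auto
  have L1: "(\<lambda>n. \<bar>sint \<Omega> mu (t n) - sint \<Omega> mu s\<bar>) \<longlonglongrightarrow> \<bar>fa_int \<Omega> M mu h - sint \<Omega> mu s\<bar>"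
    by (intro tendsto_intros L)
  have L2: "(\<lambda>n. (inverse (real (Suc n)) + e) * T) \<longlonglongrightarrow> (0 + e) * T"
    by (intro tendsto_intros LIMSEQ_inverse_real_of_nat)
  have "\<bar>sint \<Omega> mu (t n) - sint \<Omega> mu s\<bar> \<le> (inverse (real (Suc n)) + e) * T" for n
  proof (rule sint_close[OF mu t(1) s, folded T_def])
    fix x assume x: "x \<in> \<Omega>"
    have "\<bar>t n x - s x\<bar> \<le> \<bar>h x - t n x\<bar> + \<bar>h x - s x\<bar>" by simp
    then show "\<bar>t n x - s x\<bar> \<le> inverse (real (Suc n)) + e" using t(2)[OF x, of n] e[OF x] by simp
  qed
  then show ?thesis using LIMSEQ_le[OF L1 L2] unfolding T_def by auto
qed

lemma bfun_simple: "simple_fn \<Omega> M s \<Longrightarrow> bfun \<Omega> M s"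
  unfolding bfun_def by (auto intro!: exI[of _ s])

lemma fa_int_simple: assumes "mu \<in> ba M" "simple_fn \<Omega> M s" shows "fa_int \<Omega> M mu s = sint \<Omega> mu s"
  using fa_int_approx[OF assms(1) bfun_simple[OF assms(2)] assms(2), of 0] by simp


end



context algebra begin
lemma bfun_lin:
  assumes u: "bfun \<Omega> M u" and v: "bfun \<Omega> M v"
  shows "bfun \<Omega> M (\<lambda>x. a * u x + b * v x)"
  unfolding bfun_def
proof (intro allI impI)
  fix e :: real assume e: "e > 0"
  define q where "q = e / (\<bar>a\<bar> + \<bar>b\<bar> + 1)"
  have q: "q > 0" unfolding q_def using e by (simp add: add_nonneg_pos)
  obtain s where s: "simple_fn \<Omega> M s" "\<forall>x\<in>\<Omega>. \<bar>u x - s x\<bar> < q" using u q unfolding bfun_def by blast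
  obtain t where t: "simple_fn \<Omega> M t" "\<forall>x\<in>\<Omega>. \<bar>v x - t x\<bar> < q" using v q unfolding bfun_def by blast
  have "\<bar>a * u x + b * v x - (a * s x + b * t x)\<bar> < e" if x: "x \<in> \<Omega>" for x
  proof -
    have "\<bar>a * u x + b * v x - (a * s x + b * t x)\<bar> \<le> \<bar>a\<bar> * \<bar>u x - s x\<bar> + \<bar>b\<bar> * \<bar>v x - t x\<bar>"
      by (simp add: abs_mult[symmetric] right_diff_distrib[symmetric] abs_triangle_ineq[THEN order_trans] add_diff_add)
    also have "\<dots> \<le> \<bar>a\<bar> * q + \<bar>b\<bar> * q" using s(2) t(2) x by (intro add_mono mult_left_mono) auto
    also have "\<dots> = (\<bar>a\<bar> + \<bar>b\<bar>) * (e / ((\<bar>a\<bar> + \<bar>b\<bar>) + 1))" unfolding q_def by (simp only: distrib_right)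
    also have "\<dots> < e" by (rule frac_lt[OF e]) simp
    finally show ?thesis .
  qed
  then show "\<exists>s. simple_fn \<Omega> M s \<and> (\<forall>x\<in>\<Omega>. \<bar>a * u x + b * v x - s x\<bar> < e)"
    using simple_comb[OF s(1) t(1), of "\<lambda>p q. a * p + b * q"] by blast
qed

lemma bfun_bounded: assumes "bfun \<Omega> M u" shows "\<exists>K. \<forall>x\<in>\<Omega>. \<bar>u x\<bar> \<le> K"
proof -
  obtain s where s: "simple_fn \<Omega> M s" "\<forall>x\<in>\<Omega>. \<bar>u x - s x\<bar> < 1"
    using assms[unfolded bfun_def, rule_format, of 1] by auto
  obtain K where K: "\<forall>x\<in>\<Omega>. \<bar>s x\<bar> \<le> K" using simple_bounded[OF s(1)] by auto
  have "\<forall>x\<in>\<Omega>. \<bar>u x\<bar> \<le> K + 1" using s(2) K by force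
  then show ?thesis by blast
qed

lemma bfun_mult:
  assumes u: "bfun \<Omega> M u" and g: "simple_fn \<Omega> M g"
  shows "bfun \<Omega> M (\<lambda>x. u x * g x)"
  unfolding bfun_def
proof (intro allI impI)
  fix e :: real assume e: "e > 0"
  obtain G where G: "\<forall>x\<in>\<Omega>. \<bar>g x\<bar> \<le> G" using simple_bounded[OF g] by auto
  define q where "q = e / (\<bar>G\<bar> + 1)"
  have q: "q > 0" unfolding q_def using e by (simp add: add_nonneg_pos)
  obtain s where s: "simple_fn \<Omega> M s" "\<forall>x\<in>\<Omega>. \<bar>u x - s x\<bar> < q" using u q unfolding bfun_def by blast
  have "\<bar>u x * g x - s x * g x\<bar> < e" if x: "x \<in> \<Omega>" for x
  proof -
    have "\<bar>u x * g x - s x * g x\<bar> = \<bar>u x - s x\<bar> * \<bar>g x\<bar>" by (simp add: abs_mult[symmetric] left_diff_distrib)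
    also have "\<dots> \<le> q * \<bar>G\<bar>" using s(2) G x by (intro mult_mono) auto
    also have "\<dots> = \<bar>G\<bar> * (e / (\<bar>G\<bar> + 1))" unfolding q_def by simp
    also have "\<dots> < e" by (rule frac_lt[OF e]) simp
    finally show ?thesis .
  qed
  then show "\<exists>s. simple_fn \<Omega> M s \<and> (\<forall>x\<in>\<Omega>. \<bar>u x * g x - s x\<bar> < e)"
    using simple_comb[OF s(1) g, of "(*)"] by blast
qed

lemma bfun_ind: "bfun \<Omega> M u \<Longrightarrow> A \<in> M \<Longrightarrow> bfun \<Omega> M (\<lambda>x. u x * indicator A x)"
  using bfun_mult simple_indicator by blast


end



context algebra begin
lemma fa_int_lin:
  assumes mu: "mu \<in> ba M" and u: "bfun \<Omega> M u" and v: "bfun \<Omega> M v"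
  shows "fa_int \<Omega> M mu (\<lambda>x. a * u x + b * v x) = a * fa_int \<Omega> M mu u + b * fa_int \<Omega> M mu v"
proof -
  define T where "T = tv M mu \<Omega>"
  have T: "0 \<le> T" unfolding T_def using tvO_nn[OF mu] .
  have "\<bar>fa_int \<Omega> M mu (\<lambda>x. a * u x + b * v x) - (a * fa_int \<Omega> M mu u + b * fa_int \<Omega> M mu v)\<bar>
       \<le> 0 + e * (2 * (\<bar>a\<bar> + \<bar>b\<bar>) * T)" if e: "e > 0" for e
  proof -
    obtain s where s: "simple_fn \<Omega> M s" "\<forall>x\<in>\<Omega>. \<bar>u x - s x\<bar> < e" using u e unfolding bfun_def by blast
    obtain t where t: "simple_fn \<Omega> M t" "\<forall>x\<in>\<Omega>. \<bar>v x - t x\<bar> < e" using v e unfolding bfun_def by blast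
    have st: "simple_fn \<Omega> M (\<lambda>x. a * s x + b * t x)" using simple_comb[OF s(1) t(1), of "\<lambda>p q. a * p + b * q"] by simp
    have 1: "\<bar>fa_int \<Omega> M mu (\<lambda>x. a * u x + b * v x) - sint \<Omega> mu (\<lambda>x. a * s x + b * t x)\<bar> \<le> ((\<bar>a\<bar> + \<bar>b\<bar>) * e) * T"
    proof (rule fa_int_approx[OF mu bfun_lin[OF u v] st, folded T_def])
      fix x assume x: "x \<in> \<Omega>"
      have "\<bar>a * u x + b * v x - (a * s x + b * t x)\<bar> \<le> \<bar>a\<bar> * \<bar>u x - s x\<bar> + \<bar>b\<bar> * \<bar>v x - t x\<bar>"
        by (simp add: abs_mult[symmetric] right_diff_distrib[symmetric] abs_triangle_ineq[THEN order_trans] add_diff_add)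
      also have "\<dots> \<le> \<bar>a\<bar> * e + \<bar>b\<bar> * e" using s(2) t(2) x by (intro add_mono mult_left_mono) auto
      finally show "\<bar>a * u x + b * v x - (a * s x + b * t x)\<bar> \<le> (\<bar>a\<bar> + \<bar>b\<bar>) * e" by (simp add: algebra_simps)
    qed
    have 2: "\<bar>fa_int \<Omega> M mu u - sint \<Omega> mu s\<bar> \<le> e * T"
      using fa_int_approx[OF mu u s(1), of e] s(2) unfolding T_def by fastforce
    have 3: "\<bar>fa_int \<Omega> M mu v - sint \<Omega> mu t\<bar> \<le> e * T"
      using fa_int_approx[OF mu v t(1), of e] t(2) unfolding T_def by fastforce
    have lin: "sint \<Omega> mu (\<lambda>x. a * s x + b * t x) = a * sint \<Omega> mu s + b * sint \<Omega> mu t"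
      using sint_add[OF ba_fa[OF mu] simple_map[OF s(1)] simple_map[OF t(1)], of "\<lambda>p. a * p" "\<lambda>p. b * p"]
        sint_cmult[OF ba_fa[OF mu] s(1), of a] sint_cmult[OF ba_fa[OF mu] t(1), of b] by simp
    have "\<bar>a * fa_int \<Omega> M mu u - a * sint \<Omega> mu s\<bar> \<le> \<bar>a\<bar> * (e * T)"
      using 2 by (simp add: right_diff_distrib[symmetric] abs_mult mult_left_mono)
    moreover have "\<bar>b * fa_int \<Omega> M mu v - b * sint \<Omega> mu t\<bar> \<le> \<bar>b\<bar> * (e * T)"
      using 3 by (simp add: right_diff_distrib[symmetric] abs_mult mult_left_mono)
    ultimately show ?thesis using 1 lin by (simp add: algebra_simps) linarith
  qed
  then have "\<bar>fa_int \<Omega> M mu (\<lambda>x. a * u x + b * v x) - (a * fa_int \<Omega> M mu u + b * fa_int \<Omega> M mu v)\<bar> \<le> 0"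
    by (rule le_eps)
  then show ?thesis by simp
qed


end



context algebra begin
lemma fa_int_nonneg:
  assumes mu: "mu \<in> ba M" and nn: "\<And>A. A \<in> M \<Longrightarrow> 0 \<le> mu A" and u: "bfun \<Omega> M u"
    and pos: "\<And>x. x \<in> \<Omega> \<Longrightarrow> 0 \<le> u x"
  shows "0 \<le> fa_int \<Omega> M mu u"
proof -
  define T where "T = tv M mu \<Omega>"
  have "0 \<le> fa_int \<Omega> M mu u + e * (mu \<Omega> + T)" if e: "e > 0" for e
  proof -
    obtain s where s: "simple_fn \<Omega> M s" "\<forall>x\<in>\<Omega>. \<bar>u x - s x\<bar> < e" using u e unfolding bfun_def by blast
    have ge: "- e \<le> s x" if x: "x \<in> \<Omega>" for x
    proof -
      have "\<bar>u x - s x\<bar> < e" using s(2) x by auto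
      moreover have "0 \<le> u x" using assms(4)[OF x] .
      ultimately show ?thesis by (simp add: abs_less_iff)
    qed
    have "sint \<Omega> mu (\<lambda>x. - e) \<le> sint \<Omega> mu s"
      by (rule sint_mono[OF ba_fa[OF mu]]) (auto intro: nn ge simple_const s(1))
    then have a: "- e * mu \<Omega> \<le> sint \<Omega> mu s" using sint_const[OF ba_fa[OF mu]] by simp
    have "\<bar>fa_int \<Omega> M mu u - sint \<Omega> mu s\<bar> \<le> e * T"
      using fa_int_approx[OF mu u s(1), of e] s(2) unfolding T_def by fastforce
    then show ?thesis using a by (simp add: algebra_simps)
  qed
  then show ?thesis using le_eps[of 0 "fa_int \<Omega> M mu u" "mu \<Omega> + T"] by simp
qed

lemma fa_int_bound:
  assumes mu: "mu \<in> ba M" and u: "bfun \<Omega> M u" and K: "\<And>x. x \<in> \<Omega> \<Longrightarrow> \<bar>u x\<bar> \<le> K"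
  shows "\<bar>fa_int \<Omega> M mu u\<bar> \<le> K * tv M mu \<Omega>"
proof -
  define T where "T = tv M mu \<Omega>"
  have "\<bar>fa_int \<Omega> M mu u\<bar> \<le> K * T + e * (2 * T)" if e: "e > 0" for e
  proof -
    obtain s where s: "simple_fn \<Omega> M s" "\<forall>x\<in>\<Omega>. \<bar>u x - s x\<bar> < e" using u e unfolding bfun_def by blast
    have "\<bar>sint \<Omega> mu s\<bar> \<le> (K + e) * T"
      by (rule sint_bound[OF mu s(1), folded T_def]) (use s(2) K in force)
    moreover have "\<bar>fa_int \<Omega> M mu u - sint \<Omega> mu s\<bar> \<le> e * T"
      using fa_int_approx[OF mu u s(1), of e] s(2) unfolding T_def by fastforce
    ultimately show ?thesis by (simp add: algebra_simps)
  qed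
  then show ?thesis unfolding T_def by (rule le_eps)
qed


end


lemma sum_split_nat: "(\<Sum>i<m+n. f i) = (\<Sum>i<m. f i) + (\<Sum>i<n. f (i + m))" for f :: "nat \<Rightarrow> real"
proof -
  have "(\<Sum>i<m+n. f i) = (\<Sum>i\<in>{0..<m}. f i) + (\<Sum>i\<in>{m..<m+n}. f i)"
    using sum.atLeastLessThan_concat[of 0 m "m+n" f] by (simp add: atLeast0LessThan)
  also have "(\<Sum>i\<in>{m..<m+n}. f i) = (\<Sum>i\<in>{0..<n}. f (i + m))"
    using sum.shift_bounds_nat_ivl[of f 0 m n] by (simp add: add.commute)
  finally show ?thesis by (simp add: atLeast0LessThan)
qed

context algebra begin

lemma fin_add_sum: "finite I \<Longrightarrow> (\<And>i. i \<in> I \<Longrightarrow> fin_add M (F i)) \<Longrightarrow> fin_add M (\<lambda>A. \<Sum>i\<in>I. F i A)"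
  unfolding fin_add_def by (simp add: sum.distrib)

lemma fin_add_restr: "fin_add M nu \<Longrightarrow> B \<in> M \<Longrightarrow> fin_add M (\<lambda>E. nu (B \<inter> E))"
  unfolding fin_add_def by (auto simp: Int_Un_distrib) (metis Int Int_assoc Int_commute inf_bot_right Int_left_commute)

lemma sint_restr:
  assumes fa: "fin_add M nu" and s: "simple_fn \<Omega> M s" and B: "B \<in> M"
  shows "sint \<Omega> nu (\<lambda>x. s x * indicator B x) = (\<Sum>c\<in>s ` \<Omega>. c * nu (B \<inter> {x\<in>\<Omega>. s x = c}))"
proof -
  define C where "C p = (if snd p then {x\<in>\<Omega>. s x = fst p} \<inter> B else {x\<in>\<Omega>. s x = fst p} - B)" for p
  have "sint \<Omega> nu (\<lambda>x. s x * indicator B x) = (\<Sum>p\<in>s ` \<Omega> \<times> (UNIV :: bool set). (if snd p then fst p else 0) * nu (C p))"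
  proof (rule part_sint[OF fa])
    show "finite (s ` \<Omega> \<times> (UNIV :: bool set))" using simple_finite[OF s] by simp
    show "C p \<in> M" if "p \<in> s ` \<Omega> \<times> UNIV" for p
      using simple_level[OF s, of "fst p"] B unfolding C_def by auto
    show "(\<Union>p\<in>s ` \<Omega> \<times> UNIV. C p) = \<Omega>"
    proof
      show "(\<Union>p\<in>s ` \<Omega> \<times> UNIV. C p) \<subseteq> \<Omega>" unfolding C_def by auto
      show "\<Omega> \<subseteq> (\<Union>p\<in>s ` \<Omega> \<times> UNIV. C p)"
      proof
        fix x assume x: "x \<in> \<Omega>"
        show "x \<in> (\<Union>p\<in>s ` \<Omega> \<times> UNIV. C p)"
          using x by (intro UN_I[of "(s x, x \<in> B)"]) (auto simp: C_def)
      qed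
    qed
    show "disjoint_family_on C (s ` \<Omega> \<times> UNIV)"
      unfolding disjoint_family_on_def C_def by (auto simp: prod_eq_iff)
    show "s x * indicator B x = (if snd p then fst p else 0)" if "p \<in> s ` \<Omega> \<times> UNIV" "x \<in> C p" for p x
      using that unfolding C_def by (auto simp: indicator_def split: if_splits)
  qed
  also have "\<dots> = (\<Sum>c\<in>s ` \<Omega>. \<Sum>b\<in>(UNIV :: bool set). (if b then c else 0) * nu (C (c, b)))"
    by (simp add: sum.cartesian_product split_def)
  also have "\<dots> = (\<Sum>c\<in>s ` \<Omega>. c * nu (B \<inter> {x\<in>\<Omega>. s x = c}))"
    by (intro sum.cong) (auto simp: UNIV_bool C_def Int_commute)
  finally show ?thesis .
qed

lemma transfer_simple:
  fixes n :: nat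
  assumes mu: "mu \<in> ba M" and nu: "nu \<in> ba M" and BM: "\<And>i. i < n \<Longrightarrow> B i \<in> M"
    and D: "\<And>E. E \<in> M \<Longrightarrow> \<bar>mu E - (\<Sum>i<n. w i * nu (B i \<inter> E))\<bar> \<le> d"
    and s: "simple_fn \<Omega> M s" and K: "\<And>x. x \<in> \<Omega> \<Longrightarrow> \<bar>s x\<bar> \<le> K" and K0: "0 \<le> K"
  shows "\<bar>sint \<Omega> mu s - (\<Sum>i<n. w i * sint \<Omega> nu (\<lambda>x. s x * indicator (B i) x))\<bar> \<le> K * (2 * d)"
proof -
  define Df where "Df E = mu E - (\<Sum>i<n. w i * nu (B i \<inter> E))" for E
  define L where "L c = {x\<in>\<Omega>. s x = c}" for c
  have faD: "fin_add M Df"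
  proof -
    have fi: "fin_add M (\<lambda>E. w i * nu (B i \<inter> E))" if "i \<in> {..<n}" for i
      using fin_add_restr[OF ba_fa[OF nu] BM] that unfolding fin_add_def by (simp add: distrib_left)
    have "fin_add M (\<lambda>E. \<Sum>i<n. w i * nu (B i \<inter> E))"
      using fin_add_sum[of "{..<n}" "\<lambda>i E. w i * nu (B i \<inter> E)", OF finite_lessThan fi] by simp
    then show ?thesis unfolding Df_def using fin_add_lin[OF ba_fa[OF mu], of _ 1 "-1"] by simp
  qed
  have "(\<Sum>i<n. w i * sint \<Omega> nu (\<lambda>x. s x * indicator (B i) x)) = (\<Sum>i<n. w i * (\<Sum>c\<in>s ` \<Omega>. c * nu (B i \<inter> L c)))"
    using sint_restr[OF ba_fa[OF nu] s BM] unfolding L_def by simp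
  also have "\<dots> = (\<Sum>c\<in>s ` \<Omega>. c * (\<Sum>i<n. w i * nu (B i \<inter> L c)))"
    by (simp add: sum_distrib_left sum_distrib_right mult_ac sum.swap[of _ "{..<n}"])
  finally have e1: "sint \<Omega> mu s - (\<Sum>i<n. w i * sint \<Omega> nu (\<lambda>x. s x * indicator (B i) x)) = (\<Sum>c\<in>s ` \<Omega>. c * Df (L c))"
    unfolding Df_def sint_def L_def by (simp add: right_diff_distrib sum_subtractf)
  have "\<bar>\<Sum>c\<in>s ` \<Omega>. c * Df (L c)\<bar> \<le> (\<Sum>c\<in>s ` \<Omega>. \<bar>c * Df (L c)\<bar>)" by (rule sum_abs)
  also have "\<dots> \<le> (\<Sum>c\<in>s ` \<Omega>. K * \<bar>Df (L c)\<bar>)"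
    using K by (intro sum_mono) (auto simp: abs_mult intro!: mult_right_mono)
  also have "\<dots> = K * (\<Sum>C\<in>L ` s ` \<Omega>. \<bar>Df C\<bar>)"
  proof -
    have "inj_on L (s ` \<Omega>)" unfolding L_def inj_on_def by auto
    then show ?thesis by (simp add: sum.reindex sum_distrib_left)
  qed
  also have "\<dots> \<le> K * (2 * d)"
  proof -
    have "(\<Sum>C\<in>L ` s ` \<Omega>. \<bar>Df C\<bar>) \<le> 2 * d"
      by (rule abs_sum_bound[OF faD])
        (use D simple_finite[OF s] simple_level[OF s] in \<open>auto simp: Df_def L_def disjoint_def\<close>)
    then show ?thesis using K0 by (intro mult_left_mono)
  qed
  finally show ?thesis using e1 by simp
qed

lemma transfer:
  fixes n :: nat
  assumes mu: "mu \<in> ba M" and nu: "nu \<in> ba M" and BM: "\<And>i. i < n \<Longrightarrow> B i \<in> M"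
    and D: "\<And>E. E \<in> M \<Longrightarrow> \<bar>mu E - (\<Sum>i<n. w i * nu (B i \<inter> E))\<bar> \<le> d"
    and u: "bfun \<Omega> M u" and K: "\<And>x. x \<in> \<Omega> \<Longrightarrow> \<bar>u x\<bar> \<le> K" and K0: "0 \<le> K"
  shows "\<bar>fa_int \<Omega> M mu u - (\<Sum>i<n. w i * fa_int \<Omega> M nu (\<lambda>x. u x * indicator (B i) x))\<bar> \<le> K * (2 * d)"
proof -
  define Tm where "Tm = tv M mu \<Omega>"
  define Tn where "Tn = tv M nu \<Omega>"
  have "\<bar>fa_int \<Omega> M mu u - (\<Sum>i<n. w i * fa_int \<Omega> M nu (\<lambda>x. u x * indicator (B i) x))\<bar>
      \<le> K * (2 * d) + e * (Tm + (\<Sum>i<n. \<bar>w i\<bar>) * Tn + 2 * d)" if e: "e > 0" for e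
  proof -
    obtain s where s: "simple_fn \<Omega> M s" "\<forall>x\<in>\<Omega>. \<bar>u x - s x\<bar> < e" using u e unfolding bfun_def by blast
    have sK: "\<bar>s x\<bar> \<le> K + e" if "x \<in> \<Omega>" for x using s(2) K[OF that] that by force
    have 1: "\<bar>fa_int \<Omega> M mu u - sint \<Omega> mu s\<bar> \<le> e * Tm"
      using fa_int_approx[OF mu u s(1), of e] s(2) unfolding Tm_def by fastforce
    have 2: "\<bar>fa_int \<Omega> M nu (\<lambda>x. u x * indicator (B i) x) - sint \<Omega> nu (\<lambda>x. s x * indicator (B i) x)\<bar> \<le> e * Tn"
      if i: "i < n" for i
    proof (rule fa_int_approx[OF nu bfun_ind[OF u BM[OF i]] simple_comb[OF s(1) simple_indicator[OF BM[OF i]]], folded Tn_def])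
      fix x assume "x \<in> \<Omega>"
      then show "\<bar>u x * indicator (B i) x - s x * indicator (B i) x\<bar> \<le> e" using s(2) by (auto simp: indicator_def)
    qed
    have 3: "\<bar>sint \<Omega> mu s - (\<Sum>i<n. w i * sint \<Omega> nu (\<lambda>x. s x * indicator (B i) x))\<bar> \<le> (K + e) * (2 * d)"
      using transfer_simple[OF mu nu BM D s(1) sK] K0 \<open>e > 0\<close> by simp
    have 4: "\<bar>(\<Sum>i<n. w i * fa_int \<Omega> M nu (\<lambda>x. u x * indicator (B i) x)) - (\<Sum>i<n. w i * sint \<Omega> nu (\<lambda>x. s x * indicator (B i) x))\<bar>
        \<le> (\<Sum>i<n. \<bar>w i\<bar>) * (e * Tn)"
    proof -
      have "\<bar>(\<Sum>i<n. w i * fa_int \<Omega> M nu (\<lambda>x. u x * indicator (B i) x)) - (\<Sum>i<n. w i * sint \<Omega> nu (\<lambda>x. s x * indicator (B i) x))\<bar>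
          = \<bar>\<Sum>i<n. w i * (fa_int \<Omega> M nu (\<lambda>x. u x * indicator (B i) x) - sint \<Omega> nu (\<lambda>x. s x * indicator (B i) x))\<bar>"
        by (simp add: sum_subtractf right_diff_distrib)
      also have "\<dots> \<le> (\<Sum>i<n. \<bar>w i * (fa_int \<Omega> M nu (\<lambda>x. u x * indicator (B i) x) - sint \<Omega> nu (\<lambda>x. s x * indicator (B i) x))\<bar>)"
        by (rule sum_abs)
      also have "\<dots> \<le> (\<Sum>i<n. \<bar>w i\<bar> * (e * Tn))"
        using 2 by (intro sum_mono) (auto simp: abs_mult intro: mult_left_mono)
      finally show ?thesis by (simp add: sum_distrib_right)
    qed
    have d0: "0 \<le> d" using D[of "{}"] fa_empty[OF ba_fa[OF mu]] fa_empty[OF ba_fa[OF nu]] by simp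
    show ?thesis using 1 3 4 d0 e by (simp add: algebra_simps)
  qed
  then show ?thesis by (rule le_eps)
qed

end


context algebra begin

lemma RN_pos:
  assumes nu: "nu \<in> ba M" and nunn: "\<And>A. A \<in> M \<Longrightarrow> 0 \<le> nu A"
    and fam: "fin_add M m" and mnn: "\<And>A. A \<in> M \<Longrightarrow> 0 \<le> m A"
    and mtau: "\<And>A. A \<in> M \<Longrightarrow> m A \<le> tau A"
    and ac: "\<forall>\<epsilon>>0. \<exists>\<delta>>0. \<forall>A\<in>M. nu A < \<delta> \<longrightarrow> tau A < \<epsilon>" and e: "e > 0"
  shows "\<exists>n::nat. \<exists>w B. (\<forall>i<n. B i \<in> M) \<and> (\<forall>E\<in>M. \<bar>m E - (\<Sum>i<n. w i * nu (B i \<inter> E))\<bar> \<le> e)"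
proof -
  obtain k s where ks: "k \<ge> 0" "fin_add M s" "\<And>A. A \<in> M \<Longrightarrow> 0 \<le> s A \<and> s A \<le> k * nu A \<and> \<bar>m A - s A\<bar> \<le> e/2"
    using trunc[OF fam mnn ba_fa[OF nu] nunn mtau ac, of "e/2"] e by auto
  have bnd: "\<bar>s A\<bar> \<le> k * nu A" if "A \<in> M" for A using ks(3)[OF that] by auto
  obtain n B where nB: "ipart n B" "\<forall>A\<in>M. \<bar>s A - (\<Sum>i<n. s (B i) / nu (B i) * nu (B i \<inter> A))\<bar> \<le> e/2"
    using energy[OF ks(2) ba_fa[OF nu] nunn bnd, of "e/2"] e by auto
  have "\<bar>m E - (\<Sum>i<n. s (B i) / nu (B i) * nu (B i \<inter> E))\<bar> \<le> e" if E: "E \<in> M" for E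
  proof -
    let ?S = "(\<Sum>i<n. s (B i) / nu (B i) * nu (B i \<inter> E))"
    have "\<bar>s E - ?S\<bar> \<le> e/2" "\<bar>m E - s E\<bar> \<le> e/2" using nB(2) E ks(3)[OF E] by auto
    moreover have "\<bar>m E - ?S\<bar> \<le> \<bar>m E - s E\<bar> + \<bar>s E - ?S\<bar>" using abs_triangle_ineq[of "m E - s E" "s E - ?S"] by simp
    ultimately show ?thesis by linarith
  qed
  then show ?thesis using nB(1) unfolding ipart_def
    by (intro exI[of _ n] exI[of _ "\<lambda>i. s (B i) / nu (B i)"] exI[of _ B]) auto
qed

lemma RN:
  assumes lam: "lam \<in> ba M" and mu: "mu \<in> ba_ac M lam" and e: "e > 0"
  shows "\<exists>n::nat. \<exists>w B. (\<forall>i<n. B i \<in> M) \<and> (\<forall>E\<in>M. \<bar>mu E - (\<Sum>i<n. w i * tv M lam (B i \<inter> E))\<bar> \<le> e)"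
proof -
  let ?nu = "tv M lam" and ?tau = "tv M mu"
  have mub: "mu \<in> ba M" using mu unfolding ba_ac_def by auto
  have ac: "\<forall>\<epsilon>>0. \<exists>\<delta>>0. \<forall>A\<in>M. ?nu A < \<delta> \<longrightarrow> ?tau A < \<epsilon>" using mu unfolding ba_ac_def by auto
  have nu: "?nu \<in> ba M" by (rule tv_ba[OF lam])
  have nunn: "\<And>A. A \<in> M \<Longrightarrow> 0 \<le> ?nu A" using tv_nn[OF lam] .
  define mp where "mp A = (1/2) * ?tau A + (1/2) * mu A" for A
  define mn where "mn A = (1/2) * ?tau A + (-1/2) * mu A" for A
  have famp: "fin_add M mp" unfolding mp_def[abs_def] by (rule fin_add_lin[OF tv_fa[OF mub] ba_fa[OF mub]])
  have famn: "fin_add M mn" unfolding mn_def[abs_def] by (rule fin_add_lin[OF tv_fa[OF mub] ba_fa[OF mub]])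
  have g: "\<bar>mu A\<bar> \<le> ?tau A" if "A \<in> M" for A using tv_ge[OF mub that] .
  have all4: "0 \<le> mp A \<and> 0 \<le> mn A \<and> mp A \<le> ?tau A \<and> mn A \<le> ?tau A" if "A \<in> M" for A
    using g[OF that] unfolding mp_def mn_def by (auto simp: abs_le_iff)
  have mpnn: "\<And>A. A \<in> M \<Longrightarrow> 0 \<le> mp A" and mnnn: "\<And>A. A \<in> M \<Longrightarrow> 0 \<le> mn A"
    and mpt: "\<And>A. A \<in> M \<Longrightarrow> mp A \<le> ?tau A" and mnt: "\<And>A. A \<in> M \<Longrightarrow> mn A \<le> ?tau A"
    using all4 by auto
  have e2: "e/2 > 0" using e by simp
  obtain n1 w1 B1 where 1: "\<forall>i<(n1::nat). B1 i \<in> M" "\<forall>E\<in>M. \<bar>mp E - (\<Sum>i<n1. w1 i * ?nu (B1 i \<inter> E))\<bar> \<le> e/2"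
    using RN_pos[OF nu nunn famp mpnn mpt ac e2] by blast
  obtain n2 w2 B2 where 2: "\<forall>i<(n2::nat). B2 i \<in> M" "\<forall>E\<in>M. \<bar>mn E - (\<Sum>i<n2. w2 i * ?nu (B2 i \<inter> E))\<bar> \<le> e/2"
    using RN_pos[OF nu nunn famn mnnn mnt ac e2] by blast
  define w where "w i = (if i < n1 then w1 i else - w2 (i - n1))" for i
  define B where "B i = (if i < n1 then B1 i else B2 (i - n1))" for i
  have BM: "\<forall>i<n1+n2. B i \<in> M" using 1(1) 2(1) unfolding B_def by auto
  have "\<bar>mu E - (\<Sum>i<n1+n2. w i * ?nu (B i \<inter> E))\<bar> \<le> e" if E: "E \<in> M" for E
  proof -
    have s: "(\<Sum>i<n1+n2. w i * ?nu (B i \<inter> E)) = (\<Sum>i<n1. w1 i * ?nu (B1 i \<inter> E)) - (\<Sum>i<n2. w2 i * ?nu (B2 i \<inter> E))"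
      unfolding sum_split_nat by (simp add: w_def B_def sum_negf)
    have "mu E = mp E - mn E" unfolding mp_def mn_def by simp
    moreover have "\<bar>mp E - (\<Sum>i<n1. w1 i * ?nu (B1 i \<inter> E))\<bar> \<le> e/2"
      "\<bar>mn E - (\<Sum>i<n2. w2 i * ?nu (B2 i \<inter> E))\<bar> \<le> e/2" using 1(2) 2(2) E by auto
    ultimately show ?thesis unfolding s abs_le_iff by linarith
  qed
  then show ?thesis using BM by (intro exI[of _ "n1+n2"] exI[of _ w] exI[of _ B]) auto
qed

end


lemma bl_add: "banach_limit ord L \<Longrightarrow> bounded_net x \<Longrightarrow> bounded_net y \<Longrightarrow> L (\<lambda>a. x a + y a) = L x + L y"
  unfolding banach_limit_def by blast
lemma bl_mult: "banach_limit ord L \<Longrightarrow> bounded_net x \<Longrightarrow> L (\<lambda>a. c * x a) = c * L x"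
  unfolding banach_limit_def by blast
lemma bl_bound: "banach_limit ord L \<Longrightarrow> (\<And>a. \<bar>x a\<bar> \<le> c) \<Longrightarrow> \<bar>L x\<bar> \<le> c"
  unfolding banach_limit_def by blast
lemma bl_lim: "banach_limit ord L \<Longrightarrow> bounded_net x \<Longrightarrow> net_tendsto ord x l \<Longrightarrow> L x = l"
  unfolding banach_limit_def by blast

lemma bn_lin: "bounded_net x \<Longrightarrow> bounded_net y \<Longrightarrow> bounded_net (\<lambda>a. p * x a + q * y a)"
proof -
  assume "bounded_net x" "bounded_net y"
  then obtain c d where c: "\<And>a. \<bar>x a\<bar> \<le> c" and d: "\<And>a. \<bar>y a\<bar> \<le> d" unfolding bounded_net_def by auto
  have "\<bar>p * x a + q * y a\<bar> \<le> \<bar>p\<bar> * c + \<bar>q\<bar> * d" for a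
  proof -
    have "\<bar>p * x a + q * y a\<bar> \<le> \<bar>p\<bar> * \<bar>x a\<bar> + \<bar>q\<bar> * \<bar>y a\<bar>"
      using abs_triangle_ineq[of "p * x a" "q * y a"] by (simp add: abs_mult)
    also have "\<dots> \<le> \<bar>p\<bar> * c + \<bar>q\<bar> * d" using c[of a] d[of a] by (intro add_mono mult_left_mono) auto
    finally show ?thesis .
  qed
  then show ?thesis unfolding bounded_net_def by blast
qed

lemma bl_diff_bound:
  assumes "banach_limit ord L" "bounded_net x" "bounded_net y" "\<And>a. \<bar>x a - y a\<bar> \<le> c"
  shows "\<bar>L x - L y\<bar> \<le> c"
proof -
  have bm: "bounded_net (\<lambda>a. (-1) * y a)" using bn_lin[OF assms(3) assms(3), of "-1" 0] by simp
  have "L (\<lambda>a. x a + (-1) * y a) = L x + L (\<lambda>a. (-1) * y a)" by (rule bl_add[OF assms(1,2) bm])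
  also have "L (\<lambda>a. (-1) * y a) = - L y" using bl_mult[OF assms(1,3), of "-1"] by simp
  finally have "L x - L y = L (\<lambda>a. x a + (-1) * y a)" by simp
  also have "\<bar>\<dots>\<bar> \<le> c" by (rule bl_bound[OF assms(1)]) (use assms(4) in simp)
  finally show ?thesis .
qed

lemma bl_sum:
  fixes X :: "nat \<Rightarrow> 'i \<Rightarrow> real"
  assumes L: "banach_limit ord L" and X: "\<And>i. i < n \<Longrightarrow> bounded_net (X i)"
  shows "bounded_net (\<lambda>a. \<Sum>i<n. w i * X i a) \<and> L (\<lambda>a. \<Sum>i<n. w i * X i a) = (\<Sum>i<n. w i * L (X i))"
  using X
proof (induction n)
  case 0
  have b0: "bounded_net (\<lambda>a. 0::real)" unfolding bounded_net_def by auto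
  have "L (\<lambda>a. 0) = 0" using bl_mult[OF L b0, of 0] by simp
  then show ?case using b0 by simp
next
  case (Suc n)
  have IH: "bounded_net (\<lambda>a. \<Sum>i<n. w i * X i a)" "L (\<lambda>a. \<Sum>i<n. w i * X i a) = (\<Sum>i<n. w i * L (X i))"
    using Suc by auto
  have Xn: "bounded_net (X n)" using Suc.prems by auto
  have b: "bounded_net (\<lambda>a. 1 * (\<Sum>i<n. w i * X i a) + w n * X n a)" by (rule bn_lin[OF IH(1) Xn])
  have "L (\<lambda>a. \<Sum>i<Suc n. w i * X i a) = L (\<lambda>a. (\<Sum>i<n. w i * X i a) + w n * X n a)" by simp
  also have "\<dots> = L (\<lambda>a. \<Sum>i<n. w i * X i a) + L (\<lambda>a. w n * X n a)"
    by (rule bl_add[OF L IH(1)]) (use bn_lin[OF Xn Xn, of "w n" 0] in simp)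
  also have "L (\<lambda>a. w n * X n a) = w n * L (X n)" by (rule bl_mult[OF L Xn])
  finally show ?case using IH b by simp
qed

context algebra begin

lemma fa_int_diff:
  assumes "mu \<in> ba M" "bfun \<Omega> M u" "bfun \<Omega> M v"
  shows "fa_int \<Omega> M mu (\<lambda>x. u x - v x) = fa_int \<Omega> M mu u - fa_int \<Omega> M mu v"
  using fa_int_lin[OF assms, of 1 "-1"] by simp

lemma bfun_diff: "bfun \<Omega> M u \<Longrightarrow> bfun \<Omega> M v \<Longrightarrow> bfun \<Omega> M (\<lambda>x. u x - v x)"
  using bfun_lin[of u v 1 "-1"] by simp

lemma fa_int_mono:
  assumes mu: "mu \<in> ba M" and nn: "\<And>A. A \<in> M \<Longrightarrow> 0 \<le> mu A" and u: "bfun \<Omega> M u" and v: "bfun \<Omega> M v"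
    and le: "\<And>x. x \<in> \<Omega> \<Longrightarrow> u x \<le> v x"
  shows "fa_int \<Omega> M mu u \<le> fa_int \<Omega> M mu v"
  using fa_int_nonneg[OF mu nn bfun_diff[OF v u]] le fa_int_diff[OF mu v u] by simp

lemma fa_int_ind_bound:
  assumes mu: "mu \<in> ba M" and nn: "\<And>A. A \<in> M \<Longrightarrow> 0 \<le> mu A" and u: "bfun \<Omega> M u"
    and K: "\<And>x. x \<in> \<Omega> \<Longrightarrow> \<bar>u x\<bar> \<le> K" and E: "E \<in> M"
  shows "\<bar>fa_int \<Omega> M mu (\<lambda>x. u x * indicator E x)\<bar> \<le> K * mu E"
proof -
  have bi: "bfun \<Omega> M (\<lambda>x. K * indicator E x)" by (rule bfun_simple, rule simple_map, rule simple_indicator[OF E])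
  have ui: "bfun \<Omega> M (\<lambda>x. u x * indicator E x)" by (rule bfun_ind[OF u E])
  have ki: "fa_int \<Omega> M mu (\<lambda>x. K * indicator E x) = K * mu E"
    using fa_int_simple[OF mu simple_map[OF simple_indicator[OF E]], of "\<lambda>t. K * t"]
      sint_cmult[OF ba_fa[OF mu] simple_indicator[OF E], of K] sint_indicator[OF ba_fa[OF mu] E] by simp
  have K2: "u x \<le> K" "- K \<le> u x" if "x \<in> \<Omega>" for x using K[OF that] by (auto simp: abs_le_iff)
  have "fa_int \<Omega> M mu (\<lambda>x. u x * indicator E x) \<le> fa_int \<Omega> M mu (\<lambda>x. K * indicator E x)"
    by (rule fa_int_mono[OF mu nn ui bi]) (use K2 in \<open>auto simp: indicator_def\<close>)
  moreover have "fa_int \<Omega> M mu (\<lambda>x. (-1) * (K * indicator E x) + 0 * (u x * indicator E x)) \<le> fa_int \<Omega> M mu (\<lambda>x. u x * indicator E x)"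
    by (rule fa_int_mono[OF mu nn bfun_lin[OF bi ui] ui]) (use K2 in \<open>auto simp: indicator_def\<close>)
  moreover have "fa_int \<Omega> M mu (\<lambda>x. (-1) * (K * indicator E x) + 0 * (u x * indicator E x)) = - (K * mu E)"
    using fa_int_lin[OF mu bi ui, of "-1" 0] ki by simp
  ultimately show ?thesis using ki by (simp add: abs_le_iff)
qed

lemma simple_superlevel: assumes "simple_fn \<Omega> M s" shows "{x\<in>\<Omega>. P (s x)} \<in> M"
proof -
  have "{x\<in>\<Omega>. P (s x)} = (\<Union>v\<in>{v\<in>s ` \<Omega>. P v}. {x\<in>\<Omega>. s x = v})" by auto
  also have "\<dots> \<in> M" using simple_finite[OF assms] simple_level[OF assms] by (intro finite_UN) auto
  finally show ?thesis .
qed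

lemma levels_abs_bound:
  assumes faD: "fin_add M D" and D: "\<And>E. E \<in> M \<Longrightarrow> \<bar>D E\<bar> \<le> d" and s: "simple_fn \<Omega> M s"
  shows "(\<Sum>c\<in>s ` \<Omega>. \<bar>D {x\<in>\<Omega>. s x = c}\<bar>) \<le> 2 * d"
proof -
  define L where "L c = {x\<in>\<Omega>. s x = c}" for c
  have "inj_on L (s ` \<Omega>)" unfolding L_def inj_on_def by auto
  then have "(\<Sum>c\<in>s ` \<Omega>. \<bar>D (L c)\<bar>) = (\<Sum>C\<in>L ` s ` \<Omega>. \<bar>D C\<bar>)" by (simp add: sum.reindex)
  also have "\<dots> \<le> 2 * d"
    by (rule abs_sum_bound[OF faD]) (use D simple_finite[OF s] simple_level[OF s] in \<open>auto simp: L_def disjoint_def\<close>)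
  finally show ?thesis unfolding L_def .
qed

lemma ipart_fn:
  fixes m :: nat and r :: "nat \<Rightarrow> real" and B :: "nat \<Rightarrow> 'a set"
  assumes P: "ipart m B" and fa: "fin_add M nu"
  defines "g \<equiv> \<lambda>x. \<Sum>i<m. r i * indicator (B i) x"
  shows "simple_fn \<Omega> M g" "\<And>x. x \<in> \<Omega> \<Longrightarrow> \<exists>j<m. g x = r j"
    "\<And>E. E \<in> M \<Longrightarrow> sint \<Omega> nu (\<lambda>x. g x * indicator E x) = (\<Sum>i<m. r i * nu (B i \<inter> E))"
proof -
  have BM: "\<And>i. i < m \<Longrightarrow> B i \<in> M" and dj: "disjoint_family_on B {..<m}" and U: "(\<Union>i<m. B i) = \<Omega>"
    using P unfolding ipart_def by auto
  have gv: "g x = r j" if "j < m" "x \<in> B j" for j x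
  proof -
    have "g x = (\<Sum>i<m. if i = j then r j else 0)"
      unfolding g_def using dj that by (intro sum.cong) (auto simp: disjoint_family_on_def indicator_def)
    also have "\<dots> = r j" using that by simp
    finally show ?thesis .
  qed
  show "simple_fn \<Omega> M g" by (rule part_simple[where I="{..<m}" and B=B and w=r]) (use BM U gv in auto)
  show "\<exists>j<m. g x = r j" if x: "x \<in> \<Omega>" for x
  proof -
    obtain j where "j < m" "x \<in> B j" using U x by auto
    then show ?thesis using gv by blast
  qed
  show "sint \<Omega> nu (\<lambda>x. g x * indicator E x) = (\<Sum>i<m. r i * nu (B i \<inter> E))" if E: "E \<in> M" for E
  proof -
    define C where "C p = (if snd p then B (fst p) \<inter> E else B (fst p) - E)" for p
    have "sint \<Omega> nu (\<lambda>x. g x * indicator E x) = (\<Sum>p\<in>{..<m} \<times> (UNIV :: bool set). (if snd p then r (fst p) else 0) * nu (C p))"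
    proof (rule part_sint[OF fa])
      show "finite ({..<m} \<times> (UNIV :: bool set))" by simp
      show "C p \<in> M" if "p \<in> {..<m} \<times> UNIV" for p using that BM E unfolding C_def by auto
      show "(\<Union>p\<in>{..<m} \<times> UNIV. C p) = \<Omega>"
      proof
        show "(\<Union>p\<in>{..<m} \<times> UNIV. C p) \<subseteq> \<Omega>"
        proof
          fix x assume "x \<in> (\<Union>p\<in>{..<m} \<times> UNIV. C p)"
          then obtain p where p: "fst p < m" "x \<in> C p" by auto
          then have "x \<in> B (fst p)" unfolding C_def by (auto split: if_splits)
          then show "x \<in> \<Omega>" using BM[OF p(1)] sets_into_space by blast
        qed
        show "\<Omega> \<subseteq> (\<Union>p\<in>{..<m} \<times> UNIV. C p)"
        proof
          fix x assume "x \<in> \<Omega>"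
          then obtain j where j: "j < m" "x \<in> B j" using U by auto
          then show "x \<in> (\<Union>p\<in>{..<m} \<times> UNIV. C p)" by (intro UN_I[of "(j, x \<in> E)"]) (auto simp: C_def)
        qed
      qed
      show "disjoint_family_on C ({..<m} \<times> UNIV)"
        using dj unfolding disjoint_family_on_def C_def by (auto simp: prod_eq_iff)
      show "g x * indicator E x = (if snd p then r (fst p) else 0)" if "p \<in> {..<m} \<times> UNIV" "x \<in> C p" for p x
        using that gv unfolding C_def by (auto simp: indicator_def split: if_splits)
    qed
    also have "\<dots> = (\<Sum>i<m. \<Sum>b\<in>(UNIV :: bool set). (if b then r i else 0) * nu (C (i, b)))"
      by (simp add: sum.cartesian_product split_def)
    also have "\<dots> = (\<Sum>i<m. r i * nu (B i \<inter> E))"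
      by (intro sum.cong) (auto simp: UNIV_bool C_def)
    finally show ?thesis .
  qed
qed

end


locale setting = algebra +
  fixes lam :: "'a set \<Rightarrow> real" and ord :: "'i \<Rightarrow> 'i \<Rightarrow> bool" and L :: "('i \<Rightarrow> real) \<Rightarrow> real"
    and h :: "'i \<Rightarrow> 'a \<Rightarrow> real" and c :: real
  assumes lam: "lam \<in> ba M" and L: "banach_limit ord L"
    and hb: "\<And>a. bfun \<Omega> M (h a)" and hc: "\<And>a x. x \<in> \<Omega> \<Longrightarrow> \<bar>h a x\<bar> \<le> c" and c0: "0 \<le> c"
begin

abbreviation nu where "nu \<equiv> tv M lam"

lemma nu_ba: "nu \<in> ba M" by (rule tv_ba[OF lam])
lemma nu_nn: "A \<in> M \<Longrightarrow> 0 \<le> nu A" by (rule tv_nn[OF lam])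
lemma nu_fa: "fin_add M nu" by (rule tv_fa[OF lam])
lemma nu_le: "A \<in> M \<Longrightarrow> nu A \<le> nu \<Omega>" by (rule nn_mono[OF nu_fa nu_nn])

definition X :: "'a set \<Rightarrow> 'i \<Rightarrow> real" where
  "X E a = fa_int \<Omega> M nu (\<lambda>x. h a x * indicator E x)"

definition Phi :: "'a set \<Rightarrow> real" where "Phi E = L (X E)"

lemma X_bnd: "E \<in> M \<Longrightarrow> \<bar>X E a\<bar> \<le> c * nu E"
  unfolding X_def by (rule fa_int_ind_bound[OF nu_ba nu_nn hb hc])

lemma X_bn: "E \<in> M \<Longrightarrow> bounded_net (X E)"
  unfolding bounded_net_def using X_bnd by blast

lemma Phi_bnd: "E \<in> M \<Longrightarrow> \<bar>Phi E\<bar> \<le> c * nu E"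
  unfolding Phi_def by (rule bl_bound[OF L X_bnd])

lemma Phi_fa: "fin_add M Phi"
  unfolding fin_add_def
proof (intro ballI impI)
  fix A B assume A: "A \<in> M" and B: "B \<in> M" and AB: "A \<inter> B = {}"
  have "X (A \<union> B) a = X A a + X B a" for a
  proof -
    have "(\<lambda>x. h a x * indicator (A \<union> B) x) = (\<lambda>x. 1 * (h a x * indicator A x) + 1 * (h a x * indicator B x))"
      using AB by (auto simp: fun_eq_iff indicator_def)
    then show ?thesis unfolding X_def using fa_int_lin[OF nu_ba bfun_ind[OF hb[of a] A] bfun_ind[OF hb[of a] B], of 1 1] by simp
  qed
  then have "X (A \<union> B) = (\<lambda>a. X A a + X B a)" by auto
  then show "Phi (A \<union> B) = Phi A + Phi B" unfolding Phi_def using bl_add[OF L X_bn[OF A] X_bn[OF B]] by simp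
qed

lemma nu_abs_diff:
  assumes f: "\<And>n. simple_fn \<Omega> M (f n)"
    and approx: "\<And>n E. E \<in> M \<Longrightarrow> \<bar>sint \<Omega> nu (\<lambda>x. f n x * indicator E x) - Phi E\<bar> \<le> e n"
  shows "sint \<Omega> nu (\<lambda>x. \<bar>f n x - f m x\<bar>) \<le> 2 * (e n + e m)"
proof -
  define d where "d x = f n x - f m x" for x
  have ds: "simple_fn \<Omega> M d" unfolding d_def by (rule simple_comb[OF f f])
  define D where "D E = sint \<Omega> nu (\<lambda>x. d x * indicator E x)" for E
  have faD: "fin_add M D" unfolding D_def[abs_def] by (rule fin_add_sint[OF nu_fa ds])
  have Db: "\<bar>D E\<bar> \<le> e n + e m" if E: "E \<in> M" for E
  proof -
    have eq: "(\<lambda>x. d x * indicator E x) = (\<lambda>x. f n x * indicator E x - f m x * indicator E x)"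
      unfolding d_def by (auto simp: fun_eq_iff algebra_simps)
    have "D E = sint \<Omega> nu (\<lambda>x. f n x * indicator E x) - sint \<Omega> nu (\<lambda>x. f m x * indicator E x)"
      unfolding D_def eq
      by (rule sint_diff[OF nu_fa simple_comb[OF f simple_indicator[OF E]] simple_comb[OF f simple_indicator[OF E]]])
    then show ?thesis using approx[OF E, of n] approx[OF E, of m] by (simp add: abs_le_iff)
  qed
  define Lv where "Lv v = {x\<in>\<Omega>. d x = v}" for v
  have "sint \<Omega> nu (\<lambda>x. \<bar>f n x - f m x\<bar>) = (\<Sum>v\<in>d ` \<Omega>. \<bar>v\<bar> * nu (Lv v))"
    unfolding d_def[symmetric] Lv_def using level_part[OF ds] by (intro part_sint[OF nu_fa]) auto
  also have "\<dots> = (\<Sum>v\<in>d ` \<Omega>. \<bar>D (Lv v)\<bar>)"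
  proof (rule sum.cong[OF refl])
    fix v assume v: "v \<in> d ` \<Omega>"
    have LM: "Lv v \<in> M" unfolding Lv_def by (rule simple_level[OF ds])
    have "D (Lv v) = (\<Sum>w\<in>d ` \<Omega>. w * nu (Lv v \<inter> {x\<in>\<Omega>. d x = w}))"
      unfolding D_def by (rule sint_restr[OF nu_fa ds LM])
    also have "\<dots> = (\<Sum>w\<in>d ` \<Omega>. if w = v then v * nu (Lv v) else 0)"
    proof (rule sum.cong[OF refl])
      fix w
      have "Lv v \<inter> {x\<in>\<Omega>. d x = w} = (if w = v then Lv v else {})" by (auto simp: Lv_def)
      then show "w * nu (Lv v \<inter> {x\<in>\<Omega>. d x = w}) = (if w = v then v * nu (Lv v) else 0)"
        by (simp add: fa_empty[OF nu_fa])
    qed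
    also have "\<dots> = v * nu (Lv v)" using v simple_finite[OF ds] by simp
    finally show "\<bar>v\<bar> * nu (Lv v) = \<bar>D (Lv v)\<bar>" using nu_nn[OF LM] by (simp add: abs_mult)
  qed
  also have "\<dots> \<le> 2 * (e n + e m)" unfolding Lv_def by (rule levels_abs_bound[OF faD Db ds])
  finally show ?thesis .
qed

lemma l1_transfer:
  assumes mu: "mu \<in> ba_ac M lam" and eps: "\<epsilon> > 0" and C: "C \<ge> 0"
  shows "\<exists>\<eta>>0. \<forall>d. simple_fn \<Omega> M d \<and> (\<forall>x\<in>\<Omega>. \<bar>d x\<bar> \<le> C) \<and> sint \<Omega> nu (\<lambda>x. \<bar>d x\<bar>) \<le> \<eta>
           \<longrightarrow> sint \<Omega> (tv M mu) (\<lambda>x. \<bar>d x\<bar>) \<le> \<epsilon>"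
proof -
  have mub: "mu \<in> ba M" using mu unfolding ba_ac_def by auto
  let ?tau = "tv M mu"
  define T where "T = ?tau \<Omega>"
  have T: "0 \<le> T" unfolding T_def using tvO_nn[OF mub] .
  define t where "t = (\<epsilon>/2) / (T + 1)"
  define e' where "e' = (\<epsilon>/2) / (C + 1)"
  have t: "t > 0" unfolding t_def using eps T by simp
  have e': "e' > 0" unfolding e'_def using eps C by simp
  obtain \<delta> where \<delta>: "\<delta> > 0" "\<forall>A\<in>M. nu A < \<delta> \<longrightarrow> ?tau A < e'"
    using mu e' unfolding ba_ac_def by blast
  define \<eta> where "\<eta> = t * \<delta> / 2"
  have \<eta>: "\<eta> > 0" unfolding \<eta>_def using t \<delta> by simp
  have "sint \<Omega> ?tau (\<lambda>x. \<bar>d x\<bar>) \<le> \<epsilon>"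
    if d: "simple_fn \<Omega> M d" and dC: "\<forall>x\<in>\<Omega>. \<bar>d x\<bar> \<le> C" and dn: "sint \<Omega> nu (\<lambda>x. \<bar>d x\<bar>) \<le> \<eta>" for d
  proof -
    define U where "U = {x\<in>\<Omega>. t < \<bar>d x\<bar>}"
    have UM: "U \<in> M" unfolding U_def by (rule simple_superlevel[OF d])
    have ad: "simple_fn \<Omega> M (\<lambda>x. \<bar>d x\<bar>)" by (rule simple_map[OF d])
    have "t * nu U = sint \<Omega> nu (\<lambda>x. t * indicator U x)"
      using sint_cmult[OF nu_fa simple_indicator[OF UM], of t] sint_indicator[OF nu_fa UM] by simp
    also have "\<dots> \<le> sint \<Omega> nu (\<lambda>x. \<bar>d x\<bar>)"
      by (rule sint_mono[OF nu_fa nu_nn simple_map[OF simple_indicator[OF UM]] ad])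
        (auto simp: U_def indicator_def less_imp_le)
    finally have "t * nu U \<le> \<eta>" using dn by simp
    then have "nu U \<le> \<delta> / 2" unfolding \<eta>_def using t by (simp add: field_simps)
    then have "nu U < \<delta>" using \<delta>(1) by simp
    then have tU: "?tau U < e'" using \<delta>(2) UM by auto
    have s2: "simple_fn \<Omega> M (\<lambda>x. C * indicator U x)" by (rule simple_map[OF simple_indicator[OF UM]])
    have "sint \<Omega> ?tau (\<lambda>x. \<bar>d x\<bar>) \<le> sint \<Omega> ?tau (\<lambda>x. t + C * indicator U x)"
    proof (rule sint_mono[OF tv_fa[OF mub] tv_nn[OF mub] ad simple_comb[OF simple_const s2]])
      fix x assume x: "x \<in> \<Omega>"
      show "\<bar>d x\<bar> \<le> t + C * indicator U x"
      proof (cases "x \<in> U")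
        case True then show ?thesis using dC x t by auto
      next
        case False then show ?thesis using x C unfolding U_def by auto
      qed
    qed
    also have "\<dots> = t * T + C * ?tau U"
      using sint_add[OF tv_fa[OF mub] simple_const s2, of t] sint_const[OF tv_fa[OF mub], of t]
        sint_cmult[OF tv_fa[OF mub] simple_indicator[OF UM], of C] sint_indicator[OF tv_fa[OF mub] UM]
      unfolding T_def by (simp add: mult.commute)
    also have "\<dots> \<le> \<epsilon>/2 + \<epsilon>/2"
    proof (rule add_mono)
      show "t * T \<le> \<epsilon>/2" unfolding t_def using frac_lt[of "\<epsilon>/2" T] eps T by (simp add: mult.commute)
      have "C * ?tau U \<le> C * e'" using tU C by (intro mult_left_mono) auto
      also have "\<dots> \<le> \<epsilon>/2" unfolding e'_def using frac_lt[of "\<epsilon>/2" C] eps C by (simp add: mult.commute)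
      finally show "C * ?tau U \<le> \<epsilon>/2" .
    qed
    finally show ?thesis by simp
  qed
  then show ?thesis using \<eta> by blast
qed

end


context setting begin

lemma key_cauchy:
  fixes f :: "nat \<Rightarrow> 'a \<Rightarrow> real" and e :: "nat \<Rightarrow> real" and c' :: real
  assumes f: "\<And>n. simple_fn \<Omega> M (f n)" and fb: "\<And>n x. x \<in> \<Omega> \<Longrightarrow> \<bar>f n x\<bar> \<le> c'" and c': "0 \<le> c'"
    and e: "\<And>r. r > 0 \<Longrightarrow> \<exists>N. \<forall>n\<ge>N. e n \<le> r"
    and approx: "\<And>n E. E \<in> M \<Longrightarrow> \<bar>sint \<Omega> nu (\<lambda>x. f n x * indicator E x) - Phi E\<bar> \<le> e n"
    and mu: "mu \<in> ba_ac M lam"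
  shows "l1_cauchy \<Omega> M mu f"
  unfolding l1_cauchy_def
proof (intro allI impI)
  fix \<epsilon> :: real assume eps: "\<epsilon> > 0"
  obtain \<eta> where \<eta>: "\<eta> > 0" "\<forall>d. simple_fn \<Omega> M d \<and> (\<forall>x\<in>\<Omega>. \<bar>d x\<bar> \<le> 2 * c') \<and> sint \<Omega> nu (\<lambda>x. \<bar>d x\<bar>) \<le> \<eta>
           \<longrightarrow> sint \<Omega> (tv M mu) (\<lambda>x. \<bar>d x\<bar>) \<le> \<epsilon>"
    using l1_transfer[OF mu eps, of "2 * c'"] c' by auto
  obtain N where N: "\<forall>n\<ge>N. e n \<le> \<eta>/4" using e[of "\<eta>/4"] \<eta>(1) by auto
  have "sint \<Omega> (tv M mu) (\<lambda>x. \<bar>f (n + p) x - f (n + q) x\<bar>) \<le> \<epsilon>" if n: "n \<ge> N" for n p q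
  proof -
    have ds: "simple_fn \<Omega> M (\<lambda>x. f (n + p) x - f (n + q) x)" by (rule simple_comb[OF f f])
    have db: "\<forall>x\<in>\<Omega>. \<bar>f (n + p) x - f (n + q) x\<bar> \<le> 2 * c'"
    proof
      fix x assume x: "x \<in> \<Omega>"
      have "\<bar>f (n + p) x - f (n + q) x\<bar> \<le> \<bar>f (n + p) x\<bar> + \<bar>f (n + q) x\<bar>" by simp
      also have "\<dots> \<le> 2 * c'" using fb[OF x, of "n+p"] fb[OF x, of "n+q"] by simp
      finally show "\<bar>f (n + p) x - f (n + q) x\<bar> \<le> 2 * c'" .
    qed
    have "sint \<Omega> nu (\<lambda>x. \<bar>f (n + p) x - f (n + q) x\<bar>) \<le> 2 * (e (n + p) + e (n + q))"
      by (rule nu_abs_diff[OF f approx])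
    also have "\<dots> \<le> \<eta>"
    proof -
      have "e (n + p) \<le> \<eta>/4" "e (n + q) \<le> \<eta>/4" using N n by auto
      then show ?thesis by (simp only: distrib_left)
    qed
    finally have "sint \<Omega> nu (\<lambda>x. \<bar>f (n + p) x - f (n + q) x\<bar>) \<le> \<eta>" .
    then show ?thesis using \<eta>(2) ds db by blast
  qed
  then show "\<exists>N. \<forall>n\<ge>N. \<forall>p q. sint \<Omega> (tv M mu) (\<lambda>x. \<bar>f (n + p) x - f (n + q) x\<bar>) \<le> \<epsilon>" by blast
qed

end


context setting begin

lemma key_conv:
  fixes f :: "nat \<Rightarrow> 'a \<Rightarrow> real" and e :: "nat \<Rightarrow> real" and c' :: real
  assumes f: "\<And>n. simple_fn \<Omega> M (f n)" and fb: "\<And>n x. x \<in> \<Omega> \<Longrightarrow> \<bar>f n x\<bar> \<le> c'" and c': "0 \<le> c'"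
    and e: "\<And>r. r > 0 \<Longrightarrow> \<exists>N. \<forall>n\<ge>N. e n \<le> r"
    and approx: "\<And>n E. E \<in> M \<Longrightarrow> \<bar>sint \<Omega> nu (\<lambda>x. f n x * indicator E x) - Phi E\<bar> \<le> e n"
    and mu: "mu \<in> ba_ac M lam" and A: "A \<in> M"
  shows "(\<lambda>n. fa_int \<Omega> M mu (\<lambda>x. f n x * indicator A x)) \<longlonglongrightarrow> L (\<lambda>a. fa_int \<Omega> M mu (\<lambda>x. h a x * indicator A x))"
proof (rule LIMSEQ_I)
  fix r :: real assume r: "r > 0"
  have mub: "mu \<in> ba M" using mu unfolding ba_ac_def by auto
  define d where "d = (r / 4 / (c + c' + 1)) / 2"
  have d: "d > 0" unfolding d_def using r c0 c' by simp
  obtain n0 :: nat and w B where wB: "\<forall>i<n0. B i \<in> M" "\<forall>E\<in>M. \<bar>mu E - (\<Sum>i<n0. w i * nu (B i \<inter> E))\<bar> \<le> d"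
    using RN[OF lam mu d] by blast
  have BM: "\<And>i. i < n0 \<Longrightarrow> B i \<in> M" and D: "\<And>E. E \<in> M \<Longrightarrow> \<bar>mu E - (\<Sum>i<n0. w i * nu (B i \<inter> E))\<bar> \<le> d"
    using wB by auto
  define W where "W = (\<Sum>i<n0. \<bar>w i\<bar>)"
  have W: "0 \<le> W" unfolding W_def by (simp add: sum_nonneg)
  obtain N where N: "\<forall>n\<ge>N. e n \<le> r / (4 * (W + 1))" using e[of "r / (4 * (W + 1))"] r W by auto
  define Y where "Y a = fa_int \<Omega> M mu (\<lambda>x. h a x * indicator A x)" for a
  define Z where "Z a = (\<Sum>i<n0. w i * X (A \<inter> B i) a)" for a
  have ind: "(\<lambda>x. g x * indicator A x * indicator (B i) x) = (\<lambda>x. g x * indicator (A \<inter> B i) x)" for g :: "'a \<Rightarrow> real" and i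
    by (auto simp: fun_eq_iff indicator_def)
  have YZ: "\<bar>Y a - Z a\<bar> \<le> c * (2 * d)" for a
  proof -
    have "\<bar>fa_int \<Omega> M mu (\<lambda>x. h a x * indicator A x) - (\<Sum>i<n0. w i * fa_int \<Omega> M nu (\<lambda>x. h a x * indicator A x * indicator (B i) x))\<bar> \<le> c * (2 * d)"
      by (rule transfer[OF mub nu_ba BM D bfun_ind[OF hb A] _ c0]) (use hc c0 in \<open>auto simp: indicator_def abs_mult\<close>)
    then show ?thesis unfolding Y_def Z_def X_def ind .
  qed
  have bY: "bounded_net Y"
  proof -
    have "\<bar>Y a\<bar> \<le> c * tv M mu \<Omega>" for a
      unfolding Y_def by (rule fa_int_bound[OF mub bfun_ind[OF hb A]]) (use hc c0 in \<open>auto simp: indicator_def\<close>)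
    then show ?thesis unfolding bounded_net_def by blast
  qed
  have XB: "\<And>i. i < n0 \<Longrightarrow> bounded_net (X (A \<inter> B i))" using X_bn BM A by auto
  have bZ: "bounded_net Z" and LZ: "L Z = (\<Sum>i<n0. w i * Phi (A \<inter> B i))"
    using bl_sum[OF L XB, where w=w] unfolding Z_def[abs_def] Phi_def by auto
  have LYZ: "\<bar>L Y - L Z\<bar> \<le> c * (2 * d)" by (rule bl_diff_bound[OF L bY bZ YZ])
  have "\<bar>fa_int \<Omega> M mu (\<lambda>x. f n x * indicator A x) - L Y\<bar> < r" if n: "n \<ge> N" for n
  proof -
    have fA: "simple_fn \<Omega> M (\<lambda>x. f n x * indicator A x)" by (rule simple_comb[OF f simple_indicator[OF A]])
    have 1: "\<bar>fa_int \<Omega> M mu (\<lambda>x. f n x * indicator A x) - (\<Sum>i<n0. w i * fa_int \<Omega> M nu (\<lambda>x. f n x * indicator A x * indicator (B i) x))\<bar> \<le> c' * (2 * d)"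
      by (rule transfer[OF mub nu_ba BM D bfun_simple[OF fA] _ c']) (use fb c' in \<open>auto simp: indicator_def abs_mult\<close>)
    have 2: "fa_int \<Omega> M nu (\<lambda>x. f n x * indicator A x * indicator (B i) x) = sint \<Omega> nu (\<lambda>x. f n x * indicator (A \<inter> B i) x)"
      if i: "i < n0" for i
      unfolding ind using fa_int_simple[OF nu_ba simple_comb[OF f simple_indicator[OF Int[OF A BM[OF i]]]]] by simp
    have 3: "\<bar>(\<Sum>i<n0. w i * sint \<Omega> nu (\<lambda>x. f n x * indicator (A \<inter> B i) x)) - (\<Sum>i<n0. w i * Phi (A \<inter> B i))\<bar> \<le> W * e n"
    proof -
      have "\<bar>(\<Sum>i<n0. w i * sint \<Omega> nu (\<lambda>x. f n x * indicator (A \<inter> B i) x)) - (\<Sum>i<n0. w i * Phi (A \<inter> B i))\<bar>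
         = \<bar>\<Sum>i<n0. w i * (sint \<Omega> nu (\<lambda>x. f n x * indicator (A \<inter> B i) x) - Phi (A \<inter> B i))\<bar>"
        by (simp add: sum_subtractf right_diff_distrib)
      also have "\<dots> \<le> (\<Sum>i<n0. \<bar>w i * (sint \<Omega> nu (\<lambda>x. f n x * indicator (A \<inter> B i) x) - Phi (A \<inter> B i))\<bar>)"
        by (rule sum_abs)
      also have "\<dots> \<le> (\<Sum>i<n0. \<bar>w i\<bar> * e n)"
      proof (rule sum_mono)
        fix i assume "i \<in> {..<n0}"
        then have "A \<inter> B i \<in> M" using A BM by auto
        then show "\<bar>w i * (sint \<Omega> nu (\<lambda>x. f n x * indicator (A \<inter> B i) x) - Phi (A \<inter> B i))\<bar> \<le> \<bar>w i\<bar> * e n"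
          using approx[of "A \<inter> B i" n] by (simp add: abs_mult mult_left_mono)
      qed
      finally show ?thesis unfolding W_def by (simp add: sum_distrib_right)
    qed
    have sumeq: "(\<Sum>i<n0. w i * fa_int \<Omega> M nu (\<lambda>x. f n x * indicator A x * indicator (B i) x))
        = (\<Sum>i<n0. w i * sint \<Omega> nu (\<lambda>x. f n x * indicator (A \<inter> B i) x))"
      using 2 by (intro sum.cong) auto
    have We: "W * e n \<le> r / 4"
    proof -
      have "W * e n \<le> W * (r / (4 * (W + 1)))" using N n W by (intro mult_left_mono) auto
      also have "\<dots> = (W * (r/4 / (W + 1)))" by simp
      also have "\<dots> \<le> r/4" using frac_lt[of "r/4" W] r W by simp
      finally show ?thesis .
    qed
    have cd: "c' * (2 * d) + c * (2 * d) \<le> r / 4"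
    proof -
      have d2: "2 * d = r / 4 / (c + c' + 1)" by (simp only: d_def mult_2 field_sum_of_halves)
      have "c' * (2 * d) + c * (2 * d) = (c + c') * (2 * d)" by (simp add: algebra_simps)
      also have "\<dots> = (c + c') * (r / 4 / (c + c' + 1))" unfolding d2 ..
      finally have "c' * (2 * d) + c * (2 * d) = (c + c') * (r / 4 / (c + c' + 1))" .
      also have "\<dots> \<le> r / 4" using frac_lt[of "r/4" "c + c'"] r c0 c' by simp
      finally show ?thesis .
    qed
    have "\<bar>fa_int \<Omega> M mu (\<lambda>x. f n x * indicator A x) - L Y\<bar> \<le> c' * (2 * d) + W * e n + c * (2 * d)"
      using 1 3 LYZ LZ sumeq by (simp add: abs_le_iff)
    also have "\<dots> \<le> r / 2" using We cd by simp
    also have "\<dots> < r" using r by simp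
    finally show ?thesis .
  qed
  then show "\<exists>no. \<forall>n\<ge>no. norm (fa_int \<Omega> M mu (\<lambda>x. f n x * indicator A x) - L (\<lambda>a. fa_int \<Omega> M mu (\<lambda>x. h a x * indicator A x))) < r"
    unfolding Y_def by auto
qed

end


context setting begin

lemma ratio_bnd: "B \<in> M \<Longrightarrow> \<bar>Phi B / nu B\<bar> \<le> c"
proof -
  assume B: "B \<in> M"
  show ?thesis
  proof (cases "nu B = 0")
    case True then show ?thesis using c0 by simp
  next
    case False
    then have p: "nu B > 0" using nu_nn[OF B] by simp
    have le: "\<bar>Phi B\<bar> \<le> c * nu B" by (rule Phi_bnd[OF B])
    have "\<bar>Phi B / nu B\<bar> = \<bar>Phi B\<bar> / nu B" using p by (simp add: abs_divide)
    also have "\<dots> \<le> c" by (subst pos_divide_le_eq[OF p]) (use le in \<open>simp add: mult.commute\<close>)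
    finally show ?thesis .
  qed
qed

lemma inv_e: "r > 0 \<Longrightarrow> \<exists>N. \<forall>n\<ge>N. inverse (real (Suc n)) \<le> r"
  using ex_inv[of r] by (auto intro: less_imp_le)

lemma part1:
  "\<exists>f :: nat \<Rightarrow> 'a \<Rightarrow> real.
            (\<forall>n. simple_fn \<Omega> M (f n)) \<and> (\<exists>c. \<forall>n. \<forall>x\<in>\<Omega>. \<bar>f n x\<bar> \<le> c)
          \<and> (\<forall>mu\<in>ba_ac M lam. l1_cauchy \<Omega> M mu f)
          \<and> (\<forall>A\<in>M. \<forall>mu\<in>ba_ac M lam.
               (\<lambda>n. fa_int \<Omega> M mu (\<lambda>x. f n x * indicator A x))
                 \<longlonglongrightarrow> L (\<lambda>a. fa_int \<Omega> M mu (\<lambda>x. h a x * indicator A x)))"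
proof -
  have "\<forall>k. \<exists>m B. ipart m B \<and> (\<forall>A\<in>M. \<bar>Phi A - (\<Sum>i<m. Phi (B i) / nu (B i) * nu (B i \<inter> A))\<bar> \<le> inverse (real (Suc k)))"
  proof
    fix k
    show "\<exists>m B. ipart m B \<and> (\<forall>A\<in>M. \<bar>Phi A - (\<Sum>i<m. Phi (B i) / nu (B i) * nu (B i \<inter> A))\<bar> \<le> inverse (real (Suc k)))"
      by (rule energy[OF Phi_fa nu_fa nu_nn Phi_bnd]) simp_all
  qed
  then have "\<exists>mm. \<forall>k. \<exists>B. ipart (mm k) B \<and> (\<forall>A\<in>M. \<bar>Phi A - (\<Sum>i<mm k. Phi (B i) / nu (B i) * nu (B i \<inter> A))\<bar> \<le> inverse (real (Suc k)))"
    by (rule choice)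
  then obtain mm where "\<forall>k. \<exists>B. ipart (mm k) B \<and> (\<forall>A\<in>M. \<bar>Phi A - (\<Sum>i<mm k. Phi (B i) / nu (B i) * nu (B i \<inter> A))\<bar> \<le> inverse (real (Suc k)))"
    by blast
  then have "\<exists>BB. \<forall>k. ipart (mm k) (BB k) \<and> (\<forall>A\<in>M. \<bar>Phi A - (\<Sum>i<mm k. Phi (BB k i) / nu (BB k i) * nu (BB k i \<inter> A))\<bar> \<le> inverse (real (Suc k)))"
    by (rule choice)
  then obtain BB where BB: "\<forall>k. ipart (mm k) (BB k) \<and> (\<forall>A\<in>M. \<bar>Phi A - (\<Sum>i<mm k. Phi (BB k i) / nu (BB k i) * nu (BB k i \<inter> A))\<bar> \<le> inverse (real (Suc k)))"
    by blast
  have mB: "\<And>k. ipart (mm k) (BB k)"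
    "\<And>k A. A \<in> M \<Longrightarrow> \<bar>Phi A - (\<Sum>i<mm k. Phi (BB k i) / nu (BB k i) * nu (BB k i \<inter> A))\<bar> \<le> inverse (real (Suc k))"
    using BB by auto
  define f where "f k x = (\<Sum>i<mm k. Phi (BB k i) / nu (BB k i) * indicator (BB k i) x)" for k x
  have fs: "simple_fn \<Omega> M (f k)" for k
    using ipart_fn(1)[OF mB(1)[of k] nu_fa, where r="\<lambda>i. Phi (BB k i) / nu (BB k i)"] unfolding f_def by simp
  have fb: "\<bar>f k x\<bar> \<le> c" if x: "x \<in> \<Omega>" for k x
  proof -
    obtain j where j: "j < mm k" "f k x = Phi (BB k j) / nu (BB k j)"
      using ipart_fn(2)[OF mB(1)[of k] nu_fa x, where r="\<lambda>i. Phi (BB k i) / nu (BB k i)"] unfolding f_def by auto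
    have "BB k j \<in> M" using mB(1)[of k] j(1) unfolding ipart_def by auto
    then show ?thesis using j(2) ratio_bnd by simp
  qed
  have approx: "\<bar>sint \<Omega> nu (\<lambda>x. f n x * indicator E x) - Phi E\<bar> \<le> inverse (real (Suc n))" if E: "E \<in> M" for n E
  proof -
    have "sint \<Omega> nu (\<lambda>x. f n x * indicator E x) = (\<Sum>i<mm n. Phi (BB n i) / nu (BB n i) * nu (BB n i \<inter> E))"
      using ipart_fn(3)[OF mB(1)[of n] nu_fa E, where r="\<lambda>i. Phi (BB n i) / nu (BB n i)"] unfolding f_def by simp
    then show ?thesis using mB(2)[OF E, of n] by (simp add: abs_minus_commute)
  qed
  show ?thesis
    using fs fb key_cauchy[OF fs fb c0 inv_e approx] key_conv[OF fs fb c0 inv_e approx]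
    by (intro exI[of _ f]) blast
qed

end


context setting begin

lemma X_mono:
  assumes mono: "\<And>x. x \<in> \<Omega> \<Longrightarrow> h a x \<le> h b x" and E: "E \<in> M"
  shows "X E a \<le> X E b"
  unfolding X_def
  by (rule fa_int_mono[OF nu_ba nu_nn bfun_ind[OF hb E] bfun_ind[OF hb E]])
     (use mono in \<open>auto simp: indicator_def\<close>)

lemma part2:
  assumes dir: "directed ord" and mono: "\<forall>a b. ord a b \<longrightarrow> (\<forall>x\<in>\<Omega>. h a x \<le> h b x)"
  shows "\<exists>f :: nat \<Rightarrow> 'a \<Rightarrow> real.
            (\<forall>n. simple_fn \<Omega> M (f n)) \<and> (\<exists>c. \<forall>n. \<forall>x\<in>\<Omega>. \<bar>f n x\<bar> \<le> c)
          \<and> (\<forall>mu\<in>ba_ac M lam. l1_cauchy \<Omega> M mu f)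
          \<and> (\<forall>A\<in>M. \<forall>mu\<in>ba_ac M lam.
               (\<lambda>n. fa_int \<Omega> M mu (\<lambda>x. f n x * indicator A x))
                 \<longlonglongrightarrow> L (\<lambda>a. fa_int \<Omega> M mu (\<lambda>x. h a x * indicator A x)))
          \<and> (\<forall>n. \<forall>x\<in>\<Omega>. f n x \<le> f (Suc n) x)"
proof -
  have refl: "ord a a" for a using dir unfolding directed_def by auto
  have trans: "ord a b \<Longrightarrow> ord b d \<Longrightarrow> ord a d" for a b d using dir unfolding directed_def by blast
  have up: "\<exists>d. ord a d \<and> ord b d" for a b using dir unfolding directed_def by auto
  have hm: "ord a b \<Longrightarrow> x \<in> \<Omega> \<Longrightarrow> h a x \<le> h b x" for a b x using mono by auto
  define Tn where "Tn = tv M nu \<Omega>"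
  have Tn: "0 \<le> Tn" unfolding Tn_def by (rule tvO_nn[OF nu_ba])
  define V where "V a = fa_int \<Omega> M nu (h a)" for a
  have Vb: "\<bar>V a\<bar> \<le> c * Tn" for a unfolding V_def Tn_def by (rule fa_int_bound[OF nu_ba hb hc])
  have "\<forall>y\<in>range V. y \<le> c * Tn" using Vb by (auto simp: abs_le_iff)
  then have bddV: "bdd_above (range V)" unfolding bdd_above_def by blast
  define T where "T = Sup (range V)"
  have VT: "V a \<le> T" for a unfolding T_def by (rule cSup_upper[OF _ bddV]) auto
  have Vm: "ord a b \<Longrightarrow> V a \<le> V b" for a b
    unfolding V_def by (rule fa_int_mono[OF nu_ba nu_nn hb hb]) (use hm in auto)
  have "\<forall>n. \<exists>a. T - inverse (real (Suc n)) < V a"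
  proof
    fix n
    have "T - inverse (real (Suc n)) < T" by simp
    then show "\<exists>a. T - inverse (real (Suc n)) < V a"
      unfolding T_def using less_cSup_iff[OF _ bddV] by auto
  qed
  then obtain bs where bs: "\<And>n. T - inverse (real (Suc n)) < V (bs n)" by metis
  define aa where "aa = rec_nat (bs 0) (\<lambda>n an. SOME d. ord an d \<and> ord (bs (Suc n)) d)"
  have aa0: "aa 0 = bs 0" unfolding aa_def by simp
  have aaS: "ord (aa n) (aa (Suc n)) \<and> ord (bs (Suc n)) (aa (Suc n))" for n
  proof -
    have "aa (Suc n) = (SOME d. ord (aa n) d \<and> ord (bs (Suc n)) d)" unfolding aa_def by simp
    then show ?thesis using someI_ex[OF up[of "aa n" "bs (Suc n)"]] by simp
  qed
  have bsaa: "ord (bs n) (aa n)" for n by (cases n) (use aa0 refl aaS in auto)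
  have aam: "m \<le> n \<Longrightarrow> ord (aa m) (aa n)" for m n
  proof (induction n rule: dec_induct)
    case base then show ?case by (rule refl)
  next
    case (step k) then show ?case using aaS trans by blast
  qed
  have Vaa: "T - inverse (real (Suc n)) < V (aa n)" for n using bs[of n] Vm[OF bsaa[of n]] by simp
  have "\<forall>n. \<exists>s. simple_fn \<Omega> M s \<and> (\<forall>x\<in>\<Omega>. \<bar>h (aa n) x - s x\<bar> < inverse (real (Suc n)))"
    using hb unfolding bfun_def by simp
  then obtain ss where ss: "\<And>n. simple_fn \<Omega> M (ss n)" "\<And>n x. x \<in> \<Omega> \<Longrightarrow> \<bar>h (aa n) x - ss n x\<bar> < inverse (real (Suc n))"
    by metis
  define g where "g n x = ss n x - inverse (real (Suc n))" for n x
  have gs: "simple_fn \<Omega> M (g n)" for n unfolding g_def by (rule simple_map[OF ss(1)])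
  have gle: "g n x \<le> h (aa n) x" and gge: "h (aa n) x - 2 * inverse (real (Suc n)) \<le> g n x"
    if "x \<in> \<Omega>" for n x using ss(2)[OF that, of n] unfolding g_def by (auto simp: abs_less_iff)
  define f where "f = rec_nat (g 0) (\<lambda>n fn. \<lambda>x. max (fn x) (g (Suc n) x))"
  have f0: "f 0 = g 0" and fS: "f (Suc n) = (\<lambda>x. max (f n x) (g (Suc n) x))" for n unfolding f_def by auto
  have fs: "simple_fn \<Omega> M (f n)" for n
    by (induction n) (auto simp: f0 fS gs intro: simple_comb[OF _ gs])
  have fmono: "\<forall>n. \<forall>x\<in>\<Omega>. f n x \<le> f (Suc n) x" by (simp add: fS)
  have fle: "x \<in> \<Omega> \<Longrightarrow> f n x \<le> h (aa n) x" for n x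
  proof (induction n)
    case 0 then show ?case using gle by (simp add: f0)
  next
    case (Suc n)
    have "f n x \<le> h (aa (Suc n)) x" using Suc hm[OF conjunct1[OF aaS[of n]]] by (meson order_trans)
    then show ?case using gle[OF Suc.prems, of "Suc n"] by (simp add: fS)
  qed
  have fge: "x \<in> \<Omega> \<Longrightarrow> g n x \<le> f n x" for n x by (cases n) (auto simp: f0 fS)
  have fh: "\<bar>h (aa n) x - f n x\<bar> \<le> 2 * inverse (real (Suc n))" if x: "x \<in> \<Omega>" for n x
    using fle[OF x, of n] fge[OF x, of n] gge[OF x, of n] by auto
  have fb: "\<bar>f n x\<bar> \<le> c + 2" if x: "x \<in> \<Omega>" for n x
  proof -
    have "2 * inverse (real (Suc n)) \<le> 2" by (simp add: inverse_le_1_iff)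
    then show ?thesis using fh[OF x, of n] hc[OF x, of "aa n"] by (auto simp: abs_le_iff)
  qed
  define e where "e n = inverse (real (Suc n)) * (2 * Tn + 1)" for n
  have e: "\<exists>N. \<forall>n\<ge>N. e n \<le> r" if r: "r > 0" for r
  proof -
    have p: "r / (2 * Tn + 1) > 0" using r Tn by simp
    obtain N where N: "\<forall>n\<ge>N. inverse (real (Suc n)) \<le> r / (2 * Tn + 1)" using inv_e[OF p] by auto
    have "e n \<le> r" if "n \<ge> N" for n
    proof -
      have "e n \<le> r / (2 * Tn + 1) * (2 * Tn + 1)" unfolding e_def using N that Tn by (intro mult_right_mono) auto
      also have "\<dots> = r" using Tn by simp
      finally show ?thesis .
    qed
    then show ?thesis by blast
  qed
  have approx: "\<bar>sint \<Omega> nu (\<lambda>x. f n x * indicator E x) - Phi E\<bar> \<le> e n" if E: "E \<in> M" for n E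
  proof -
    define TE where "TE = Sup (range (X E))"
    have "\<forall>y\<in>range (X E). y \<le> c * nu E" using X_bnd[OF E] by (auto simp: abs_le_iff)
    then have bddX: "bdd_above (range (X E))" unfolding bdd_above_def by blast
    have XT: "X E a \<le> TE" for a unfolding TE_def by (rule cSup_upper[OF _ bddX]) auto
    have Xm: "ord a b \<Longrightarrow> X E a \<le> X E b" for a b by (rule X_mono[OF _ E]) (rule hm)
    have net: "net_tendsto ord (X E) TE"
      unfolding net_tendsto_def
    proof (intro allI impI)
      fix \<epsilon> :: real assume eps: "\<epsilon> > 0"
      have "TE - \<epsilon> < TE" using eps by simp
      then obtain a0 where a0: "TE - \<epsilon> < X E a0" unfolding TE_def using less_cSup_iff[OF _ bddX] by auto
      have "\<bar>X E a - TE\<bar> < \<epsilon>" if "ord a0 a" for a using a0 Xm[OF that] XT[of a] by auto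
      then show "\<exists>a0. \<forall>a. ord a0 a \<longrightarrow> \<bar>X E a - TE\<bar> < \<epsilon>" by blast
    qed
    have PhiE: "Phi E = TE" unfolding Phi_def by (rule bl_lim[OF L X_bn[OF E] net])
    have gap: "TE \<le> X E (aa n) + inverse (real (Suc n))"
      unfolding TE_def
    proof (rule cSup_least)
      show "range (X E) \<noteq> {}" by simp
      fix y assume "y \<in> range (X E)"
      then obtain b where y: "y = X E b" by auto
      obtain d where d: "ord (aa n) d" "ord b d" using up by blast
      have hd: "bfun \<Omega> M (\<lambda>x. h d x - h (aa n) x)" by (rule bfun_diff[OF hb hb])
      have "X E d - X E (aa n) = fa_int \<Omega> M nu (\<lambda>x. h d x * indicator E x - h (aa n) x * indicator E x)"
        unfolding X_def by (rule fa_int_diff[OF nu_ba bfun_ind[OF hb E] bfun_ind[OF hb E], symmetric])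
      also have "\<dots> \<le> fa_int \<Omega> M nu (\<lambda>x. h d x - h (aa n) x)"
      proof (rule fa_int_mono[OF nu_ba nu_nn bfun_diff[OF bfun_ind[OF hb E] bfun_ind[OF hb E]] hd])
        fix x assume x: "x \<in> \<Omega>"
        show "h d x * indicator E x - h (aa n) x * indicator E x \<le> h d x - h (aa n) x"
          using hm[OF d(1) x] by (auto simp: indicator_def)
      qed
      also have "\<dots> = V d - V (aa n)" unfolding V_def by (rule fa_int_diff[OF nu_ba hb hb])
      also have "\<dots> < inverse (real (Suc n))" using VT[of d] Vaa[of n] by simp
      finally have "X E d < X E (aa n) + inverse (real (Suc n))" by simp
      then show "y \<le> X E (aa n) + inverse (real (Suc n))" using Xm[OF d(2)] y by simp
    qed
    have fA: "simple_fn \<Omega> M (\<lambda>x. f n x * indicator E x)" by (rule simple_comb[OF fs simple_indicator[OF E]])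
    have "\<bar>X E (aa n) - sint \<Omega> nu (\<lambda>x. f n x * indicator E x)\<bar> \<le> (2 * inverse (real (Suc n))) * Tn"
      unfolding X_def Tn_def
      by (rule fa_int_approx[OF nu_ba bfun_ind[OF hb E] fA]) (use fh in \<open>auto simp: indicator_def\<close>)
    then show ?thesis using gap XT[of "aa n"] PhiE unfolding e_def by (simp add: abs_le_iff algebra_simps)
  qed
  have c2: "0 \<le> c + 2" using c0 by simp
  show ?thesis
    using fs fb fmono key_cauchy[OF fs fb c2 e approx] key_conv[OF fs fb c2 e approx]
    by (intro exI[of _ f]) blast
qed

end


theorem mainTheorem9:
  fixes \<Omega> :: "'a set" and M :: "'a set set" and lam :: "'a set \<Rightarrow> real"
    and ord :: "'i \<Rightarrow> 'i \<Rightarrow> bool" and L :: "('i \<Rightarrow> real) \<Rightarrow> real"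
    and h :: "'i \<Rightarrow> 'a \<Rightarrow> real"
  assumes "algebra \<Omega> M" and "lam \<in> ba M"
    and "directed ord" and "banach_limit ord L"
    and "\<forall>a. bfun \<Omega> M (h a)" and "\<exists>c. \<forall>a. \<forall>x\<in>\<Omega>. \<bar>h a x\<bar> \<le> c"
  shows "(\<exists>f :: nat \<Rightarrow> 'a \<Rightarrow> real.
            (\<forall>n. simple_fn \<Omega> M (f n)) \<and> (\<exists>c. \<forall>n. \<forall>x\<in>\<Omega>. \<bar>f n x\<bar> \<le> c)
          \<and> (\<forall>mu\<in>ba_ac M lam. l1_cauchy \<Omega> M mu f)
          \<and> (\<forall>A\<in>M. \<forall>mu\<in>ba_ac M lam.
               (\<lambda>n. fa_int \<Omega> M mu (\<lambda>x. f n x * indicator A x))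
                 \<longlonglongrightarrow> L (\<lambda>a. fa_int \<Omega> M mu (\<lambda>x. h a x * indicator A x))))
       \<and> ((\<forall>a b. ord a b \<longrightarrow> (\<forall>x\<in>\<Omega>. h a x \<le> h b x)) \<longrightarrow>
          (\<exists>f :: nat \<Rightarrow> 'a \<Rightarrow> real.
            (\<forall>n. simple_fn \<Omega> M (f n)) \<and> (\<exists>c. \<forall>n. \<forall>x\<in>\<Omega>. \<bar>f n x\<bar> \<le> c)
          \<and> (\<forall>mu\<in>ba_ac M lam. l1_cauchy \<Omega> M mu f)
          \<and> (\<forall>A\<in>M. \<forall>mu\<in>ba_ac M lam.
               (\<lambda>n. fa_int \<Omega> M mu (\<lambda>x. f n x * indicator A x))
                 \<longlonglongrightarrow> L (\<lambda>a. fa_int \<Omega> M mu (\<lambda>x. h a x * indicator A x)))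
          \<and> (\<forall>n. \<forall>x\<in>\<Omega>. f n x \<le> f (Suc n) x)))"
proof -
  obtain c where c: "\<forall>a. \<forall>x\<in>\<Omega>. \<bar>h a x\<bar> \<le> c" using assms(6) by blast
  have S: "setting \<Omega> M lam ord L h (max c 0)"
  proof (intro setting.intro setting_axioms.intro)
    show "algebra \<Omega> M" by (rule assms(1))
    show "lam \<in> ba M" by (rule assms(2))
    show "banach_limit ord L" by (rule assms(4))
    show "bfun \<Omega> M (h a)" for a using assms(5) by blast
    show "\<bar>h a x\<bar> \<le> max c 0" if "x \<in> \<Omega>" for a x proof -
      have "\<bar>h a x\<bar> \<le> c" using c that by blast
      then show ?thesis by (simp add: le_max_iff_disj)
    qed
    show "0 \<le> max c 0" by simp
  qed
  show ?thesis using setting.part1[OF S] setting.part2[OF S assms(3)] by blast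
qed


end
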